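(* Let $F$ be a field, $n\ge1$, and $a\in\mathrm{M}_n(F)$. Then: (i) there exists $g\in\mathrm{GL}_n(F)$ with (1) $gag^{-1}={}^{\top}a$ and (2) ${}^{\top}g=g$; (ii) if the minimal polynomial and the characteristic polynomial of $a$ coincide (equivalently, the $F[X]$-module $V_a$ is cyclic), then every $g\in\mathrm{GL}_n(F)$ satisfying (1) also satisfies (2); (iii) if the minimal and characteristic polynomials of $a$ differ (equivalently, $V_a$ is not cyclic), then there exists $g\in\mathrm{GL}_n(F)$ satisfying (1) but not (2).
   Context: ${}^{\top}$ denotes matrix transpose. $V_a$ denotes $V=F^n$ (column vectors) with the $F[X]$-module structure $f(X)v=f(a)v$. *)

theory Defs
  imports "Jordan_Normal_Form.Char_Poly" "Jordan_Normal_Form.Gauss_Jordan_Elimination"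
begin

definition GL :: "nat \<Rightarrow> 'a :: field mat set" where
  "GL n = {g \<in> carrier_mat n n. invertible_mat g}"

definition inv_mat :: "'a :: field mat \<Rightarrow> 'a mat" where
  "inv_mat g = the (mat_inverse g)"

definition poly_mat :: "'a :: field poly \<Rightarrow> 'a mat \<Rightarrow> 'a mat" where
  "poly_mat f A = fold_coeffs (\<lambda>c M. c \<cdot>\<^sub>m 1\<^sub>m (dim_row A) + A * M) f (0\<^sub>m (dim_row A) (dim_row A))"

definition min_poly :: "'a :: field mat \<Rightarrow> 'a poly" where
  "min_poly A = (THE p. monic p \<and> (\<forall>f. poly_mat f A = 0\<^sub>m (dim_row A) (dim_row A) \<longleftrightarrow> p dvd f))"

end

theory Submission
  imports Defs
begin

lemma poly_mat_0[simp]: "poly_mat 0 A = 0\<^sub>m (dim_row A) (dim_row A)"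
  unfolding poly_mat_def by simp

lemma poly_mat_pCons: assumes A: "A \<in> carrier_mat n n"
  shows "poly_mat (pCons c p) A = c \<cdot>\<^sub>m 1\<^sub>m n + A * poly_mat p A"
proof (cases "p = 0 \<and> c = 0")
  case True
  then show ?thesis using A by (auto simp: poly_mat_def)
next
  case False
  hence "coeffs (pCons c p) = c # coeffs p" by (auto simp: cCons_def)
  then show ?thesis using A by (simp add: poly_mat_def fold_coeffs_def)
qed

lemma poly_mat_carrier[simp]: assumes A: "A \<in> carrier_mat n n"
  shows "poly_mat p A \<in> carrier_mat n n"
proof (induct p rule: pCons_induct)
  case 0
  then show ?case using A by simp
next
  case (pCons a p)
  then show ?case using A by (simp add: poly_mat_pCons[OF A])
qed

lemma poly_mat_pCons_vec: assumes A: "A \<in> carrier_mat n n" and v: "v \<in> carrier_vec n"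
  shows "poly_mat (pCons c p) A *\<^sub>v v = c \<cdot>\<^sub>v v + A *\<^sub>v (poly_mat p A *\<^sub>v v)"
proof -
  have "(c \<cdot>\<^sub>m 1\<^sub>m n) *\<^sub>v v = c \<cdot>\<^sub>v v" using v
    by (intro eq_vecI, auto simp: smult_scalar_prod_distrib[of _ n])
  thus ?thesis unfolding poly_mat_pCons[OF A] using A v
  by (simp add: add_mult_distrib_mat_vec[of _ n n] assoc_mult_mat_vec[of _ n n _ n])
qed

lemma poly_mat_vec_carrier[simp]: assumes A: "A \<in> carrier_mat n n"
  shows "poly_mat p A *\<^sub>v v \<in> carrier_vec n"
  using poly_mat_carrier[OF A, of p] by (intro carrier_vecI, auto)

lemma zero_mat_mult_vec[simp]: "v \<in> carrier_vec n \<Longrightarrow> 0\<^sub>m m n *\<^sub>v v = 0\<^sub>v m"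
  by (intro eq_vecI, auto)

lemma pow_vec_carrier[simp]: "A \<in> carrier_mat n n \<Longrightarrow> A ^\<^sub>m k *\<^sub>v v \<in> carrier_vec n"
  by (intro carrier_vecI, auto)

lemma mat_vec_index: assumes "A \<in> carrier_mat m n" "w \<in> carrier_vec n" "i < m"
  shows "(A *\<^sub>v w) $ i = (\<Sum>j<n. A $$ (i,j) * w $ j)"
  using assms by (auto simp: mult_mat_vec_def scalar_prod_def lessThan_atLeast0 intro!: sum.cong)

lemma mat_mult_zero_vec[simp]: "A \<in> carrier_mat m n \<Longrightarrow> A *\<^sub>v 0\<^sub>v n = 0\<^sub>v m"
  by (intro eq_vecI, auto)

lemma poly_mat_0_vec[simp]: assumes A: "A \<in> carrier_mat n n" "v \<in> carrier_vec n"
  shows "poly_mat 0 A *\<^sub>v v = 0\<^sub>v n"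
  using A by auto

lemma poly_mat_add_vec: assumes A: "A \<in> carrier_mat n n" and v: "v \<in> carrier_vec n"
  shows "poly_mat (p + q) A *\<^sub>v v = poly_mat p A *\<^sub>v v + poly_mat q A *\<^sub>v v"
proof (induct p arbitrary: q rule: pCons_induct)
  case 0
  then show ?case using A v by simp
next
  case (pCons a p)
  obtain b q' where q: "q = pCons b q'" by (cases q)
  show ?case unfolding q add_pCons poly_mat_pCons_vec[OF A v] pCons(2)
    using A v by (intro eq_vecI, auto simp: mult_add_distrib_mat_vec[of _ n n] algebra_simps)
qed

lemma poly_mat_smult_vec: assumes A: "A \<in> carrier_mat n n" and v: "v \<in> carrier_vec n"
  shows "poly_mat (Polynomial.smult c p) A *\<^sub>v v = c \<cdot>\<^sub>v (poly_mat p A *\<^sub>v v)"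
proof (induct p rule: pCons_induct)
  case 0
  then show ?case using A v by (intro eq_vecI, auto)
next
  case (pCons a p)
  show ?case unfolding Polynomial.smult_pCons poly_mat_pCons_vec[OF A v] pCons(2)
    using A v by (intro eq_vecI, auto simp: mult_mat_vec[of _ n n] algebra_simps)
qed

lemma poly_mat_mult_vec: assumes A: "A \<in> carrier_mat n n" and v: "v \<in> carrier_vec n"
  shows "poly_mat (p * q) A *\<^sub>v v = poly_mat p A *\<^sub>v (poly_mat q A *\<^sub>v v)"
proof (induct p rule: pCons_induct)
  case 0
  then show ?case using A v by (intro eq_vecI, auto)
next
  case (pCons a p)
  have "poly_mat (pCons a p * q) A *\<^sub>v v = poly_mat (Polynomial.smult a q + pCons 0 (p * q)) A *\<^sub>v v" by simp
  also have "\<dots> = a \<cdot>\<^sub>v (poly_mat q A *\<^sub>v v) + A *\<^sub>v (poly_mat p A *\<^sub>v (poly_mat q A *\<^sub>v v))"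
    unfolding poly_mat_add_vec[OF A v] poly_mat_smult_vec[OF A v] poly_mat_pCons_vec[OF A v] pCons(2)
    using A v by (intro eq_vecI, auto)
  also have "\<dots> = poly_mat (pCons a p) A *\<^sub>v (poly_mat q A *\<^sub>v v)"
    using poly_mat_pCons_vec[OF A poly_mat_vec_carrier[OF A]] by simp
  finally show ?case .
qed

lemma poly_mat_const_vec: assumes A: "A \<in> carrier_mat n n" and v: "v \<in> carrier_vec n"
  shows "poly_mat [:c:] A *\<^sub>v v = c \<cdot>\<^sub>v v"
  unfolding poly_mat_pCons_vec[OF A v] using A v by (intro eq_vecI, auto)

lemma poly_mat_1_vec: assumes A: "A \<in> carrier_mat n n" and v: "v \<in> carrier_vec n"
  shows "poly_mat 1 A *\<^sub>v v = v"
  using poly_mat_const_vec[OF A v, of 1] by (simp add: one_pCons)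

lemma poly_mat_comm_vec: assumes A: "A \<in> carrier_mat n n" and v: "v \<in> carrier_vec n"
  shows "poly_mat p A *\<^sub>v (poly_mat q A *\<^sub>v v) = poly_mat q A *\<^sub>v (poly_mat p A *\<^sub>v v)"
  using poly_mat_mult_vec[OF A v, of p q] poly_mat_mult_vec[OF A v, of q p] by (simp add: mult.commute)

lemma poly_mat_X_vec: assumes A: "A \<in> carrier_mat n n" and v: "v \<in> carrier_vec n"
  shows "poly_mat [:0,1:] A *\<^sub>v v = A *\<^sub>v v"
  unfolding poly_mat_pCons_vec[OF A v] poly_mat_const_vec[OF A v] using A v by (intro eq_vecI, auto)

lemma pow_mat_comm: assumes A: "A \<in> carrier_mat n n"
  shows "A ^\<^sub>m k * A = A * A ^\<^sub>m k"
proof (induct k)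
  case 0
  then show ?case using A by simp
next
  case (Suc k)
  have "A ^\<^sub>m Suc k * A = (A ^\<^sub>m k * A) * A" by simp
  also have "\<dots> = (A * A ^\<^sub>m k) * A" using Suc by simp
  also have "\<dots> = A * (A ^\<^sub>m k * A)" using A by (simp add: assoc_mult_mat[of _ n n _ n _ n])
  finally show ?case by simp
qed

lemma pow_mat_Suc_vec: assumes A: "A \<in> carrier_mat n n" and v: "v \<in> carrier_vec n"
  shows "A ^\<^sub>m Suc k *\<^sub>v v = A *\<^sub>v (A ^\<^sub>m k *\<^sub>v v)"
  unfolding pow_mat.simps pow_mat_comm[OF A] using A v
  by (simp add: assoc_mult_mat_vec[of _ n n _ n])

lemma poly_mat_expand: assumes A: "A \<in> carrier_mat n n" and v: "v \<in> carrier_vec n"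
  and i: "i < n" and co: "\<And>k. k \<ge> N \<Longrightarrow> coeff f k = 0"
  shows "(poly_mat f A *\<^sub>v v) $ i = (\<Sum>k<N. coeff f k * (A ^\<^sub>m k *\<^sub>v v) $ i)"
  using co i
proof (induct f arbitrary: N i rule: pCons_induct)
  case 0
  then show ?case using A v by simp
next
  case (pCons c f)
  show ?case
  proof (cases N)
    case 0
    with pCons have "pCons c f = 0" by (intro poly_eqI, auto)
    with pCons(1) show ?thesis by simp
  next
    case (Suc N')
    have co': "coeff f k = 0" if "k \<ge> N'" for k using pCons(3)[of "Suc k"] that Suc by auto
    have "(poly_mat (pCons c f) A *\<^sub>v v) $ i = c * v $ i + (A *\<^sub>v (poly_mat f A *\<^sub>v v)) $ i"
      unfolding poly_mat_pCons_vec[OF A v] using A v pCons(4) by simp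
    also have "(A *\<^sub>v (poly_mat f A *\<^sub>v v)) $ i = (\<Sum>j<n. A $$ (i,j) * (poly_mat f A *\<^sub>v v) $ j)"
      using A pCons(4) by (intro mat_vec_index, auto)
    also have "\<dots> = (\<Sum>j<n. A $$ (i,j) * (\<Sum>k<N'. coeff f k * (A ^\<^sub>m k *\<^sub>v v) $ j))"
      by (intro sum.cong refl, subst pCons(2)[OF co'], auto)
    also have "\<dots> = (\<Sum>k<N'. coeff f k * (\<Sum>j<n. A $$ (i,j) * (A ^\<^sub>m k *\<^sub>v v) $ j))"
      by (simp add: sum_distrib_left sum_distrib_right sum.swap[of _ "{..<n}"] algebra_simps)
    also have "\<dots> = (\<Sum>k<N'. coeff f k * (A ^\<^sub>m Suc k *\<^sub>v v) $ i)"
      unfolding pow_mat_Suc_vec[OF A v] using A pCons(4) v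
      by (intro sum.cong refl arg_cong[of _ _ "\<lambda>x. _ * x"] mat_vec_index[symmetric], auto)
    finally show ?thesis unfolding Suc sum.lessThan_Suc_shift using A v pCons(4) by simp
  qed
qed

definition inj_mat :: "'a :: field mat \<Rightarrow> bool" where
  "inj_mat A = (\<forall>v \<in> carrier_vec (dim_col A). A *\<^sub>v v = 0\<^sub>v (dim_row A) \<longrightarrow> v = 0\<^sub>v (dim_col A))"

lemma kernel_wide: fixes A :: "'a :: field mat"
  assumes A: "A \<in> carrier_mat nr nc" and lt: "nr < nc"
  shows "\<exists>c \<in> carrier_vec nc. c \<noteq> 0\<^sub>v nc \<and> A *\<^sub>v c = 0\<^sub>v nr"
proof -
  define r where "r = (\<lambda>i. vec nc (\<lambda>j. if i < nr then A $$ (i,j) else 0))"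
  define B where "B = mat\<^sub>r nc nc (\<lambda>i. if i = nc - 1 then 0\<^sub>v nc else r i)"
  have B: "B \<in> carrier_mat nc nc" unfolding B_def by auto
  have "det B = 0" unfolding B_def
    by (rule det_row_0, insert lt, auto simp: r_def)
  from this[unfolded det_0_iff_vec_prod_zero[OF B]] obtain v where
    v: "v \<in> carrier_vec nc" "v \<noteq> 0\<^sub>v nc" "B *\<^sub>v v = 0\<^sub>v nc" by auto
  have "A *\<^sub>v v = 0\<^sub>v nr"
  proof (intro eq_vecI)
    fix i assume i: "i < dim_vec (0\<^sub>v nr :: 'a vec)"
    hence i: "i < nr" by simp
    have "(B *\<^sub>v v) $ i = 0" using v(3) i lt by (metis index_zero_vec(1) less_trans)
    moreover have "(B *\<^sub>v v) $ i = (\<Sum>j<nc. B $$ (i,j) * v $ j)"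
      by (rule mat_vec_index[OF B v(1)], insert i lt, auto)
    moreover have "(A *\<^sub>v v) $ i = (\<Sum>j<nc. A $$ (i,j) * v $ j)"
      by (rule mat_vec_index[OF A v(1) i])
    moreover have "(\<Sum>j<nc. B $$ (i,j) * v $ j) = (\<Sum>j<nc. A $$ (i,j) * v $ j)"
      using i lt by (intro sum.cong refl, auto simp: B_def r_def)
    ultimately show "(A *\<^sub>v v) $ i = 0\<^sub>v nr $ i" using i by simp
  qed (insert A, auto)
  with v show ?thesis by auto
qed

lemma inj_mat_inverse: fixes A :: "'a :: field mat"
  assumes A: "A \<in> carrier_mat n n" and inj: "inj_mat A"
  shows "\<exists>B \<in> carrier_mat n n. A * B = 1\<^sub>m n \<and> B * A = 1\<^sub>m n"
proof -
  have "det A \<noteq> 0" unfolding det_0_iff_vec_prod_zero[OF A] using inj A unfolding inj_mat_def by auto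
  from det_non_zero_imp_unit[OF A this, of "()"]
  show ?thesis unfolding Units_def ring_mat_def by auto
qed

lemma inverse_inj_mat: fixes A :: "'a :: field mat"
  assumes A: "A \<in> carrier_mat n m" and B: "B \<in> carrier_mat m n" and BA: "B * A = 1\<^sub>m m"
  shows "inj_mat A"
  unfolding inj_mat_def
proof (intro ballI impI)
  fix v assume v: "v \<in> carrier_vec (dim_col A)" and Av: "A *\<^sub>v v = 0\<^sub>v (dim_row A)"
  have "v = (B * A) *\<^sub>v v" using BA v A by simp
  also have "\<dots> = B *\<^sub>v (A *\<^sub>v v)" using A B v by (simp add: assoc_mult_mat_vec[of _ m n _ m])
  also have "\<dots> = 0\<^sub>v (dim_col A)" unfolding Av using A B by simp
  finally show "v = 0\<^sub>v (dim_col A)" .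
qed

lemma sum_split_add: fixes d k :: nat and f :: "nat \<Rightarrow> 'b :: comm_monoid_add" shows "(\<Sum>j<d+k. f j) = (\<Sum>j<d. f j) + (\<Sum>j<k. f (d+j))"
  by (induct k, auto simp: add.assoc)

definition hcat :: "'a mat \<Rightarrow> 'a mat \<Rightarrow> 'a mat" where
  "hcat K M = mat (dim_row K) (dim_col K + dim_col M)
     (\<lambda>(i,j). if j < dim_col K then K $$ (i,j) else M $$ (i, j - dim_col K))"

lemma hcat_carrier[simp]: "K \<in> carrier_mat n d \<Longrightarrow> M \<in> carrier_mat n k \<Longrightarrow> hcat K M \<in> carrier_mat n (d + k)"
  unfolding hcat_def by auto

lemma hcat_index: "K \<in> carrier_mat n d \<Longrightarrow> M \<in> carrier_mat n k \<Longrightarrow> i < n \<Longrightarrow> j < d + k \<Longrightarrow>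
  hcat K M $$ (i,j) = (if j < d then K $$ (i,j) else M $$ (i, j - d))"
  unfolding hcat_def by auto

lemma hcat_mult_vec: fixes K :: "'a :: field mat"
  assumes K: "K \<in> carrier_mat n d" and M: "M \<in> carrier_mat n k"
  and x: "x \<in> carrier_vec d" and y: "y \<in> carrier_vec k"
  shows "hcat K M *\<^sub>v (x @\<^sub>v y) = K *\<^sub>v x + M *\<^sub>v y"
proof (intro eq_vecI)
  fix i assume "i < dim_vec (K *\<^sub>v x + M *\<^sub>v y)"
  hence i: "i < n" using M by simp
  have "(hcat K M *\<^sub>v (x @\<^sub>v y)) $ i = (\<Sum>j<d+k. hcat K M $$ (i,j) * (x @\<^sub>v y) $ j)"
    by (rule mat_vec_index[OF hcat_carrier[OF K M] _ i], insert x y, auto)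
  also have "\<dots> = (\<Sum>j<d. hcat K M $$ (i,j) * (x @\<^sub>v y) $ j) + (\<Sum>j<k. hcat K M $$ (i,d+j) * (x @\<^sub>v y) $ (d+j))"
    by (rule sum_split_add)
  also have "\<dots> = (\<Sum>j<d. K $$ (i,j) * x $ j) + (\<Sum>j<k. M $$ (i,j) * y $ j)"
    using K M x y i by (auto simp: hcat_index intro!: sum.cong)
  also have "\<dots> = (K *\<^sub>v x) $ i + (M *\<^sub>v y) $ i"
    by (simp only: mat_vec_index[OF K x i] mat_vec_index[OF M y i])
  also have "\<dots> = (K *\<^sub>v x + M *\<^sub>v y) $ i" using K M x y i by simp
  finally show "(hcat K M *\<^sub>v (x @\<^sub>v y)) $ i = (K *\<^sub>v x + M *\<^sub>v y) $ i" .
qed (insert K M, auto simp: hcat_def)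

lemma hcat_zero: "K \<in> carrier_mat n d \<Longrightarrow> hcat K (0\<^sub>m n 0) = K"
  by (intro eq_matI, auto simp: hcat_def)

lemma hcat_assoc: "K \<in> carrier_mat n d \<Longrightarrow> U \<in> carrier_mat n e \<Longrightarrow> M \<in> carrier_mat n k \<Longrightarrow>
  hcat (hcat K U) M = hcat K (hcat U M)"
  by (intro eq_matI, auto simp: hcat_def)

lemma extend_inj: fixes K :: "'a :: field mat"
  assumes "K \<in> carrier_mat n d" "inj_mat K" "d \<le> n"
  shows "\<exists>M \<in> carrier_mat n (n - d). inj_mat (hcat K M)"
  using assms
proof (induct "n - d" arbitrary: K d)
  case 0
  hence "n - d = 0" by simp
  thus ?case using 0 by (intro bexI[of _ "0\<^sub>m n 0"], auto simp: hcat_zero)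
next
  case (Suc k d K)
  note K = Suc(3)
  have lt: "d < n" using Suc(2) by simp
  have KT: "K\<^sup>T \<in> carrier_mat d n" using K by simp
  from kernel_wide[OF KT lt] obtain w where
    w: "w \<in> carrier_vec n" "w \<noteq> 0\<^sub>v n" "K\<^sup>T *\<^sub>v w = 0\<^sub>v d" by auto
  obtain i where i: "i < n" "w $ i \<noteq> 0"
  proof -
    have "\<exists>i<n. w $ i \<noteq> 0"
    proof (rule ccontr)
      assume "\<not> ?thesis"
      hence "w = 0\<^sub>v n" using w(1) by (intro eq_vecI, auto)
      with w(2) show False by simp
    qed
    thus ?thesis using that by auto
  qed
  define U where "U = mat n 1 (\<lambda>(r,_). if r = i then 1 else (0::'a))"
  have U: "U \<in> carrier_mat n 1" unfolding U_def by auto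
  define K' where "K' = hcat K U"
  have K': "K' \<in> carrier_mat n (d + 1)" unfolding K'_def using hcat_carrier[OF K U] .
  have injK': "inj_mat K'" unfolding inj_mat_def
  proof (intro ballI impI)
    fix c assume c: "c \<in> carrier_vec (dim_col K')" and Kc: "K' *\<^sub>v c = 0\<^sub>v (dim_row K')"
    from c K' have c: "c \<in> carrier_vec (d + 1)" by simp
    define x where "x = vec_first c d"
    define y where "y = vec_last c 1"
    have cxy: "c = x @\<^sub>v y" unfolding x_def y_def using c by simp
    have x: "x \<in> carrier_vec d" and y: "y \<in> carrier_vec 1" unfolding x_def y_def by auto
    have eq: "K *\<^sub>v x + U *\<^sub>v y = 0\<^sub>v n" using Kc K' unfolding cxy K'_def hcat_mult_vec[OF K U x y] by simp
    have Uy: "U *\<^sub>v y = vec n (\<lambda>r. if r = i then y $ 0 else 0)"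
      by (intro eq_vecI, subst mat_vec_index[OF U y], auto simp: U_def)
    have "0 = w \<bullet> (K *\<^sub>v x + U *\<^sub>v y)" unfolding eq using w(1) by simp
    also have "\<dots> = w \<bullet> (K *\<^sub>v x) + w \<bullet> (U *\<^sub>v y)"
      by (rule scalar_prod_add_distrib[OF w(1)], insert K U x y, auto)
    also have "w \<bullet> (K *\<^sub>v x) = (K\<^sup>T *\<^sub>v w) \<bullet> x" by (rule transpose_vec_mult_scalar[symmetric, OF K x w(1)])
    also have "\<dots> = 0" unfolding w(3) using x by simp
    also have "w \<bullet> (U *\<^sub>v y) = w $ i * y $ 0" unfolding Uy scalar_prod_def using w(1) i
      by (auto simp: if_distrib[of "\<lambda>x. _ * x"] sum.delta cong: if_cong)
    finally have "y $ 0 = 0" using i by simp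
    hence y0: "y = 0\<^sub>v 1" using y by (intro eq_vecI, auto)
    hence "K *\<^sub>v x = 0\<^sub>v n" using eq U y K x by simp
    hence "x = 0\<^sub>v d" using Suc(4) K x unfolding inj_mat_def by auto
    thus "c = 0\<^sub>v (dim_col K')" unfolding cxy y0 using K' by (intro eq_vecI, auto)
  qed
  have "k = n - (d + 1)" using Suc(2) by simp
  from Suc(1)[OF this K' injK'] lt obtain M' where M': "M' \<in> carrier_mat n (n - (d + 1))"
    and inj: "inj_mat (hcat K' M')" by auto
  have "hcat U M' \<in> carrier_mat n (1 + (n - (d + 1)))" using hcat_carrier[OF U M'] .
  hence "hcat U M' \<in> carrier_mat n (n - d)" using lt by (simp add: Suc_diff_Suc)
  moreover have "hcat K (hcat U M') = hcat K' M'" unfolding K'_def by (rule hcat_assoc[OF K U M', symmetric])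
  ultimately show ?case using inj by (intro bexI[of _ "hcat U M'"], simp_all)
qed

lemma hankel_inj: fixes H :: "'a :: field mat"
  assumes H: "H \<in> carrier_mat d d"
  and Hh: "\<And>i j. i < d \<Longrightarrow> j < d \<Longrightarrow> H $$ (i,j) = h (i+j)"
  and h: "\<And>k. k < d \<Longrightarrow> h k = (if k = d - 1 then 1 else 0)"
  shows "inj_mat H"
  unfolding inj_mat_def
proof (intro ballI impI)
  fix c assume c: "c \<in> carrier_vec (dim_col H)" and Hc: "H *\<^sub>v c = 0\<^sub>v (dim_row H)"
  from c H have c: "c \<in> carrier_vec d" by simp
  have main: "t < d \<Longrightarrow> c $ (d - 1 - t) = 0" for t
  proof (induct t rule: less_induct)
    case (less t)
    have "0 = (H *\<^sub>v c) $ t" using Hc H less by simp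
    also have "\<dots> = (\<Sum>j<d. H $$ (t,j) * c $ j)" by (rule mat_vec_index[OF H c less(2)])
    also have "\<dots> = (\<Sum>j<d. if j = d - 1 - t then c $ (d - 1 - t) else 0)"
    proof (intro sum.cong refl)
      fix j assume j: "j \<in> {..<d}"
      show "H $$ (t,j) * c $ j = (if j = d - 1 - t then c $ (d - 1 - t) else 0)"
      proof (cases "j < d - 1 - t")
        case True
        thus ?thesis using Hh[of t j] h[of "t + j"] j less(2) by auto
      next
        case False
        show ?thesis
        proof (cases "j = d - 1 - t")
          case True
          thus ?thesis using Hh[of t j] h[of "t + j"] j less(2) by auto
        next
          case ne: False
          with False have "d - 1 - j < t" using j less(2) by auto
          from less(1)[OF this] j have "c $ j = 0" by auto
          thus ?thesis using ne by simp
        qed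
      qed
    qed
    also have "\<dots> = c $ (d - 1 - t)" using less(2) by (subst sum.delta, auto)
    finally show ?case by simp
  qed
  show "c = 0\<^sub>v (dim_col H)"
  proof (intro eq_vecI)
    fix j assume "j < dim_vec (0\<^sub>v (dim_col H) :: 'a vec)"
    hence j: "j < d" using H by simp
    from main[of "d - 1 - j"] j have "c $ j = 0" by auto
    thus "c $ j = 0\<^sub>v (dim_col H) $ j" using j H by simp
  qed (insert c H, auto)
qed

lemma ideal_monic_gen: fixes I :: "'a :: field poly set"
  assumes f0: "f0 \<in> I" "f0 \<noteq> 0"
  and add: "\<And>f g. f \<in> I \<Longrightarrow> g \<in> I \<Longrightarrow> f + g \<in> I"
  and mul: "\<And>f g. f \<in> I \<Longrightarrow> g * f \<in> I"
  shows "\<exists>p. monic p \<and> (\<forall>f. f \<in> I \<longleftrightarrow> p dvd f)"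
proof -
  obtain f where f: "f \<in> I \<and> f \<noteq> 0" and min: "\<And>g. g \<in> I \<and> g \<noteq> 0 \<Longrightarrow> degree f \<le> degree g"
    using ex_has_least_nat[of "\<lambda>f. f \<in> I \<and> f \<noteq> 0" f0 degree] f0 by blast
  define p where "p = [:inverse (lead_coeff f):] * f"
  have pI: "p \<in> I" unfolding p_def by (rule mul, insert f, auto)
  have mon: "monic p" unfolding p_def using f by (simp add: lead_coeff_mult)
  have p0: "p \<noteq> 0" using mon by auto
  have dp: "degree p = degree f" unfolding p_def using f by (simp add: degree_mult_eq)
  show ?thesis
  proof (intro exI[of _ p] conjI allI iffI mon)
    fix g assume g: "g \<in> I"
    have "g mod p = g + [:-1:] * ((g div p) * p)" by (simp add: mod_div_mult_eq[symmetric] algebra_simps)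
    hence "g mod p \<in> I" using g pI add mul by metis
    moreover have "g mod p = 0"
    proof (rule ccontr)
      assume ne: "g mod p \<noteq> 0"
      from degree_mod_less'[OF p0 ne] have "degree (g mod p) < degree f" unfolding dp .
      with min[of "g mod p"] ne \<open>g mod p \<in> I\<close> show False by auto
    qed
    thus "p dvd g" by (simp add: mod_eq_0_iff_dvd)
  next
    fix g assume "p dvd g"
    then obtain k where "g = p * k" by (rule dvdE)
    thus "g \<in> I" using mul[OF pI, of k] by (simp add: mult.commute)
  qed
qed

lemma monic_dvd_antisym: fixes p :: "'a :: field poly"
  assumes "monic p" "monic q" "p dvd q" "q dvd p" shows "p = q"
proof -
  from assms(3) obtain k where k: "q = p * k" by (rule dvdE)
  have p0: "p \<noteq> 0" "q \<noteq> 0" using assms by auto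
  have "degree p \<le> degree q" "degree q \<le> degree p" using assms p0 by (auto simp: dvd_imp_degree_le)
  hence "degree k = 0" using k p0 by (auto simp: degree_mult_eq)
  moreover have "lead_coeff k = 1" using assms(1,2) k by (simp add: lead_coeff_mult)
  ultimately have "k = 1" by (metis monic_degree_0)
  thus ?thesis using k by simp
qed

definition cop :: "'a :: field poly \<Rightarrow> 'a poly \<Rightarrow> bool" where
  "cop a b \<longleftrightarrow> (\<exists>x y. x * a + y * b = 1)"

lemma cop_sym: "cop a b \<Longrightarrow> cop b a"
  unfolding cop_def by (metis add.commute)

lemma cop_mult_left: assumes "cop a c" "cop b c" shows "cop (a * b) c"
proof -
  from assms obtain x y u w where 1: "x * a + y * c = 1" and 2: "u * b + w * c = 1" unfolding cop_def by auto
  have "(x * a + y * c) * (u * b + w * c) = 1" using 1 2 by simp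
  hence "(x * u) * (a * b) + (x * a * w + y * u * b + y * w * c) * c = 1" by (simp add: algebra_simps)
  thus ?thesis unfolding cop_def by blast
qed

lemma cop_power: assumes "cop a c" shows "cop (a ^ e) c"
proof (induct e)
  case 0
  then show ?case unfolding cop_def by (intro exI[of _ 1] exI[of _ 0], simp)
next
  case (Suc e)
  then show ?case using cop_mult_left[OF assms Suc] by simp
qed

lemma cop_dvd_mult: assumes "cop a b" "a dvd b * h" shows "a dvd h"
proof -
  from assms obtain x y where 1: "x * a + y * b = 1" unfolding cop_def by auto
  have "h = x * a * h + y * (b * h)" using arg_cong[OF 1, of "\<lambda>t. t * h"] by (simp add: algebra_simps)
  moreover have "a dvd x * a * h + y * (b * h)" using assms(2) by (simp add: dvd_add)
  ultimately show ?thesis by simp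
qed

lemma cop_mult_dvd: assumes "cop a b" "a dvd h" "b dvd h" shows "a * b dvd h"
proof -
  from assms obtain x y where 1: "x * a + y * b = 1" unfolding cop_def by auto
  have "h = x * (a * h) + y * (b * h)" using arg_cong[OF 1, of "\<lambda>t. t * h"] by (simp add: algebra_simps)
  moreover have "a * b dvd a * h" using assms(3) by simp
  moreover have "a * b dvd b * h" using assms(2) by (simp add: mult.commute)
  ultimately show ?thesis by (metis dvd_add dvd_mult2 mult.commute)
qed

lemma ex_gcd: fixes a b :: "'a :: field poly" assumes a: "a \<noteq> 0"
  shows "\<exists>d x y. monic d \<and> d dvd a \<and> d dvd b \<and> d = x * a + y * b"
proof -
  let ?I = "{x * a + y * b | x y. True}"
  have "a \<in> ?I" by (intro CollectI exI[of _ 1] exI[of _ 0], simp)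
  moreover have "f + g \<in> ?I" if "f \<in> ?I" "g \<in> ?I" for f g
  proof -
    from that obtain x y x' y' where "f = x * a + y * b" "g = x' * a + y' * b" by auto
    hence "f + g = (x + x') * a + (y + y') * b" by (simp add: algebra_simps)
    thus ?thesis by blast
  qed
  moreover have "g * f \<in> ?I" if "f \<in> ?I" for f g
  proof -
    from that obtain x y where "f = x * a + y * b" by auto
    hence "g * f = (g * x) * a + (g * y) * b" by (simp add: algebra_simps)
    thus ?thesis by blast
  qed
  ultimately obtain d where d: "monic d" "\<And>f. f \<in> ?I \<longleftrightarrow> d dvd f"
    using ideal_monic_gen[of a ?I] a by blast
  have "b \<in> ?I" by (intro CollectI exI[of _ 0] exI[of _ 1], simp)
  moreover have "d \<in> ?I" using d(2)[of d] by simp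
  ultimately show ?thesis using d \<open>a \<in> ?I\<close> by blast
qed

definition irr :: "'a :: field poly \<Rightarrow> bool" where
  "irr p \<longleftrightarrow> degree p > 0 \<and> (\<forall>q. q dvd p \<longrightarrow> degree q = 0 \<or> degree q = degree p)"

lemma ex_irr_dvd: fixes h :: "'a :: field poly" assumes h: "degree h > 0"
  shows "\<exists>p. irr p \<and> monic p \<and> p dvd h"
proof -
  have "\<exists>q. (degree q > 0 \<and> q dvd h) \<and> (\<forall>r. degree r > 0 \<and> r dvd h \<longrightarrow> degree q \<le> degree r)"
    using ex_has_least_nat[of "\<lambda>q. degree q > 0 \<and> q dvd h" h degree] h by auto
  then obtain q where q: "degree q > 0 \<and> q dvd h" and min: "\<And>r. degree r > 0 \<and> r dvd h \<Longrightarrow> degree q \<le> degree r"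
    by blast
  have q0: "q \<noteq> 0" using q by auto
  define p where "p = [:inverse (lead_coeff q):] * q"
  have mon: "monic p" unfolding p_def using q0 by (simp add: lead_coeff_mult)
  have dp: "degree p = degree q" unfolding p_def using q0 by (simp add: degree_mult_eq)
  have "q = Polynomial.smult (lead_coeff q) p" unfolding p_def using q0 by simp
  hence pq: "p dvd q" by (metis dvd_refl dvd_smult)
  have ph: "p dvd h" using pq q dvd_trans by blast
  have "irr p" unfolding irr_def
  proof (intro conjI allI impI)
    show "degree p > 0" using dp q by simp
    fix r assume r: "r dvd p"
    show "degree r = 0 \<or> degree r = degree p"
    proof (cases "degree r = 0")
      case False
      hence "degree q \<le> degree r" using min[of r] r ph dvd_trans by blast
      moreover have "degree r \<le> degree p" using r mon by (intro dvd_imp_degree_le, auto)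
      ultimately show ?thesis using dp by simp
    qed simp
  qed
  thus ?thesis using mon ph by blast
qed

lemma irr_cop: fixes p :: "'a :: field poly" assumes p: "irr p" and nd: "\<not> p dvd s" shows "cop p s"
proof -
  have p0: "p \<noteq> 0" using p unfolding irr_def by auto
  from ex_gcd[OF p0, of s] obtain d x y where d: "monic d" "d dvd p" "d dvd s" "d = x * p + y * s" by blast
  have "degree d = 0 \<or> degree d = degree p" using p d(2) unfolding irr_def by auto
  thus ?thesis
  proof
    assume "degree d = 0"
    with d(1) have "d = 1" using monic_degree_0 by blast
    thus ?thesis using d(4) unfolding cop_def by auto
  next
    assume deg: "degree d = degree p"
    from d(2) obtain k where k: "p = d * k" by (rule dvdE)
    have "degree k = 0" using deg k p0 by (auto simp: degree_mult_eq)
    then obtain c where c: "k = [:c:]" by (metis degree_0_id)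
    with k p0 have c0: "c \<noteq> 0" by auto
    have "p = Polynomial.smult c d" using k c by simp
    hence "p dvd d" using c0 by (metis dvd_refl smult_dvd_iff)
    with d(3) nd show ?thesis using dvd_trans by blast
  qed
qed

lemma pow_decomp: fixes p :: "'a :: field poly" assumes p: "irr p"
  shows "h \<noteq> 0 \<Longrightarrow> \<exists>j s. h = p ^ j * s \<and> \<not> p dvd s"
proof (induct "degree h" arbitrary: h rule: less_induct)
  case less
  show ?case
  proof (cases "p dvd h")
    case False
    thus ?thesis by (intro exI[of _ 0] exI[of _ h], simp)
  next
    case True
    then obtain h' where h': "h = p * h'" by (rule dvdE)
    have h0: "h' \<noteq> 0" using less h' by auto
    have p0: "p \<noteq> 0" using p unfolding irr_def by auto
    have "degree h = degree p + degree h'" using h' h0 p0 by (simp add: degree_mult_eq)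
    hence "degree h' < degree h" using p unfolding irr_def by auto
    from less(1)[OF this h0] obtain j s where "h' = p ^ j * s" "\<not> p dvd s" by blast
    thus ?thesis using h' by (intro exI[of _ "Suc j"] exI[of _ s], simp add: algebra_simps)
  qed
qed

lemma key_split: fixes f g :: "'a :: field poly"
  assumes "monic f" "monic g" "\<not> g dvd f"
  shows "\<exists>f1 f2 g1 g2. monic f1 \<and> monic f2 \<and> monic g1 \<and> monic g2 \<and> f = f1 * f2 \<and> g = g1 * g2
     \<and> cop f1 g1 \<and> degree f2 < degree g1"
  using assms
proof (induct "degree g" arbitrary: g rule: less_induct)
  case less
  note f = less(2) and g = less(3) and nd = less(4)
  have dg: "degree g > 0"
  proof (rule ccontr)
    assume "\<not> ?thesis"
    hence "g = 1" using g monic_degree_0 by blast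
    with nd show False by simp
  qed
  from ex_irr_dvd[OF dg] obtain p where p: "irr p" "monic p" "p dvd g" by blast
  have g0: "g \<noteq> 0" and f0: "f \<noteq> 0" using f g by auto
  have p0: "p \<noteq> 0" and dp: "degree p > 0" using p unfolding irr_def by auto
  from pow_decomp[OF p(1) g0] obtain e r where gr: "g = p ^ e * r" and pr: "\<not> p dvd r" by blast
  from pow_decomp[OF p(1) f0] obtain j s where fs: "f = p ^ j * s" and ps: "\<not> p dvd s" by blast
  have e: "e \<noteq> 0"
  proof
    assume "e = 0"
    with gr pr p(3) show False by simp
  qed
  have r0: "r \<noteq> 0" and s0: "s \<noteq> 0" using gr fs g0 f0 by auto
  have mr: "monic r" using g p(2) unfolding gr by (simp add: lead_coeff_mult lead_coeff_power)
  have ms: "monic s" using f p(2) unfolding fs by (simp add: lead_coeff_mult lead_coeff_power)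
  have cpr: "cop p r" and cps: "cop p s" using irr_cop[OF p(1)] pr ps by auto
  have degg: "degree g = e * degree p + degree r" unfolding gr using p0 r0
    by (simp add: degree_mult_eq degree_power_eq)
  show ?case
  proof (cases "j < e")
    case True
    show ?thesis
    proof (intro exI conjI)
      show "monic s" "monic (p ^ j)" "monic (p ^ e)" "monic r" using ms mr p(2) by (auto simp: monic_power)
      show "f = s * p ^ j" "g = p ^ e * r" using fs gr by (auto simp: mult.commute)
      show "cop s (p ^ e)" by (rule cop_sym, rule cop_power[OF cps])
      show "degree (p ^ j) < degree (p ^ e)" using True dp p0 by (simp add: degree_power_eq)
    qed
  next
    case False
    have nd': "\<not> r dvd f"
    proof
      assume "r dvd f"
      hence "r dvd p ^ j * s" unfolding fs .
      moreover have "cop r (p ^ j)" by (rule cop_sym, rule cop_power[OF cpr])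
      ultimately have "r dvd s" using cop_dvd_mult by blast
      moreover have "p ^ e dvd p ^ j" using False by (simp add: le_imp_power_dvd)
      ultimately have "g dvd f" unfolding gr fs by (simp add: mult_dvd_mono)
      with nd show False by simp
    qed
    have "degree r < degree g" using degg e dp by simp
    from less(1)[OF this f mr nd'] obtain f1 f2 r1 r2 where IH: "monic f1" "monic f2" "monic r1" "monic r2"
      "f = f1 * f2" "r = r1 * r2" "cop f1 r1" "degree f2 < degree r1" by blast
    show ?thesis
    proof (intro exI conjI)
      show "monic f1" "monic f2" "monic r1" "monic (p ^ e * r2)" using IH p(2) by (auto simp: monic_power monic_mult)
      show "f = f1 * f2" "g = r1 * (p ^ e * r2)" "cop f1 r1" "degree f2 < degree r1"
        using IH gr by (auto simp: algebra_simps)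
    qed
  qed
qed

definition ann :: "'a :: field mat \<Rightarrow> 'a vec \<Rightarrow> 'a poly" where
  "ann A v = (SOME p. monic p \<and> (\<forall>f. poly_mat f A *\<^sub>v v = 0\<^sub>v (dim_row A) \<longleftrightarrow> p dvd f))"

definition kmat :: "'a :: field mat \<Rightarrow> 'a vec \<Rightarrow> nat \<Rightarrow> 'a mat" where
  "kmat A v N = mat (dim_row A) N (\<lambda>(i,j). (A ^\<^sub>m j *\<^sub>v v) $ i)"

lemma kmat_carrier[simp]: "A \<in> carrier_mat n n \<Longrightarrow> kmat A v N \<in> carrier_mat n N"
  unfolding kmat_def by auto

lemma coeff_monsum: "coeff (\<Sum>j<N. monom (c j) j) k = (if k < N then c k else 0)"
  by (simp add: coeff_sum coeff_monom)

lemma kmat_poly: fixes A :: "'a :: field mat"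
  assumes A: "A \<in> carrier_mat n n" and v: "v \<in> carrier_vec n" and c: "c \<in> carrier_vec N"
  shows "kmat A v N *\<^sub>v c = poly_mat (\<Sum>j<N. monom (c $ j) j) A *\<^sub>v v"
proof (intro eq_vecI)
  fix i assume "i < dim_vec (poly_mat (\<Sum>j<N. monom (c $ j) j) A *\<^sub>v v)"
  hence i: "i < n" using poly_mat_carrier[OF A, of "\<Sum>j<N. monom (c $ j) j"] by auto
  have "(kmat A v N *\<^sub>v c) $ i = (\<Sum>j<N. kmat A v N $$ (i,j) * c $ j)"
    by (rule mat_vec_index[OF kmat_carrier[OF A] c i])
  also have "\<dots> = (\<Sum>k<N. coeff (\<Sum>j<N. monom (c $ j) j) k * (A ^\<^sub>m k *\<^sub>v v) $ i)"
    using A i by (intro sum.cong refl, auto simp: kmat_def coeff_monsum)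
  also have "\<dots> = (poly_mat (\<Sum>j<N. monom (c $ j) j) A *\<^sub>v v) $ i"
    by (rule poly_mat_expand[OF A v i, symmetric], auto simp: coeff_monsum)
  finally show "(kmat A v N *\<^sub>v c) $ i = (poly_mat (\<Sum>j<N. monom (c $ j) j) A *\<^sub>v v) $ i" .
qed (insert A, auto simp: kmat_def carrier_matD(1)[OF poly_mat_carrier[OF A]])

lemma ann_exists: fixes A :: "'a :: field mat"
  assumes A: "A \<in> carrier_mat n n" and v: "v \<in> carrier_vec n"
  shows "\<exists>f. f \<noteq> 0 \<and> degree f \<le> n \<and> poly_mat f A *\<^sub>v v = 0\<^sub>v n"
proof -
  from kernel_wide[OF kmat_carrier[OF A, of v "n+1"]] obtain c where
    c: "c \<in> carrier_vec (n+1)" "c \<noteq> 0\<^sub>v (n+1)" "kmat A v (n+1) *\<^sub>v c = 0\<^sub>v n" by auto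
  define F where "F = (\<Sum>j<n+1. monom (c $ j) j)"
  have "F \<noteq> 0"
  proof
    assume "F = 0"
    hence "c $ k = 0" if "k < n + 1" for k using coeff_monsum[of "\<lambda>j. c $ j" "n+1" k] that unfolding F_def by auto
    hence "c = 0\<^sub>v (n+1)" using c(1) by (intro eq_vecI, auto)
    with c(2) show False by simp
  qed
  moreover have "degree F \<le> n" unfolding F_def by (rule degree_le, auto simp: coeff_monsum)
  moreover have "poly_mat F A *\<^sub>v v = 0\<^sub>v n" using c(3) kmat_poly[OF A v c(1)] unfolding F_def by simp
  ultimately show ?thesis by blast
qed

lemma ann_spec: fixes A :: "'a :: field mat"
  assumes A: "A \<in> carrier_mat n n" and v: "v \<in> carrier_vec n"
  shows "monic (ann A v)" "poly_mat f A *\<^sub>v v = 0\<^sub>v n \<longleftrightarrow> ann A v dvd f"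
proof -
  let ?I = "{f. poly_mat f A *\<^sub>v v = 0\<^sub>v n}"
  from ann_exists[OF A v] obtain F where F: "F \<noteq> 0" "poly_mat F A *\<^sub>v v = 0\<^sub>v n" by blast
  have "\<exists>p. monic p \<and> (\<forall>f. f \<in> ?I \<longleftrightarrow> p dvd f)"
  proof (rule ideal_monic_gen[of F])
    fix f g assume "f \<in> ?I" "g \<in> ?I"
    thus "f + g \<in> ?I" using A v by (simp add: poly_mat_add_vec)
  next
    fix f g assume "f \<in> ?I"
    thus "g * f \<in> ?I" using A v by (simp add: poly_mat_mult_vec)
  qed (insert F, auto)
  hence "\<exists>p. monic p \<and> (\<forall>f. poly_mat f A *\<^sub>v v = 0\<^sub>v (dim_row A) \<longleftrightarrow> p dvd f)" using A by simp
  from someI_ex[OF this] have "monic (ann A v) \<and> (\<forall>f. poly_mat f A *\<^sub>v v = 0\<^sub>v (dim_row A) \<longleftrightarrow> ann A v dvd f)"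
    unfolding ann_def .
  thus "monic (ann A v)" "poly_mat f A *\<^sub>v v = 0\<^sub>v n \<longleftrightarrow> ann A v dvd f" using A by auto
qed

lemma ann_eq: fixes A :: "'a :: field mat"
  assumes A: "A \<in> carrier_mat n n" and v: "v \<in> carrier_vec n"
  and p: "monic p" and gen: "\<And>f. poly_mat f A *\<^sub>v v = 0\<^sub>v n \<longleftrightarrow> p dvd f"
  shows "ann A v = p"
proof (rule monic_dvd_antisym[OF ann_spec(1)[OF A v] p])
  show "ann A v dvd p" using gen[of p] ann_spec(2)[OF A v, of p] by simp
  show "p dvd ann A v" using gen[of "ann A v"] ann_spec(2)[OF A v, of "ann A v"] by simp
qed

lemma ann_degree: fixes A :: "'a :: field mat"
  assumes A: "A \<in> carrier_mat n n" and v: "v \<in> carrier_vec n"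
  shows "degree (ann A v) \<le> n"
proof -
  from ann_exists[OF A v] obtain F where F: "F \<noteq> 0" "degree F \<le> n" "poly_mat F A *\<^sub>v v = 0\<^sub>v n" by blast
  hence "ann A v dvd F" using ann_spec(2)[OF A v] by auto
  from dvd_imp_degree_le[OF this F(1)] F(2) show ?thesis by simp
qed

lemma ann_quot: fixes A :: "'a :: field mat"
  assumes A: "A \<in> carrier_mat n n" and v: "v \<in> carrier_vec n"
  and qr: "ann A v = q * r" and q: "monic q" and r: "monic r"
  shows "ann A (poly_mat q A *\<^sub>v v) = r"
proof (rule ann_eq[OF A _ r])
  show "poly_mat q A *\<^sub>v v \<in> carrier_vec n" using A by simp
  fix f
  have q0: "q \<noteq> 0" using q by auto
  have "poly_mat f A *\<^sub>v (poly_mat q A *\<^sub>v v) = poly_mat (q * f) A *\<^sub>v v"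
    using poly_mat_mult_vec[OF A v, of f q] by (simp add: mult.commute)
  also have "\<dots> = 0\<^sub>v n \<longleftrightarrow> q * r dvd q * f" using ann_spec(2)[OF A v] qr by simp
  also have "\<dots> \<longleftrightarrow> r dvd f" using q0 by simp
  finally show "poly_mat f A *\<^sub>v (poly_mat q A *\<^sub>v v) = 0\<^sub>v n \<longleftrightarrow> r dvd f" by simp
qed

lemma ann_sum: fixes A :: "'a :: field mat"
  assumes A: "A \<in> carrier_mat n n" and v: "v \<in> carrier_vec n" and w: "w \<in> carrier_vec n"
  and cp: "cop (ann A v) (ann A w)"
  shows "ann A (v + w) = ann A v * ann A w"
proof (rule ann_eq[OF A])
  show vw: "v + w \<in> carrier_vec n" using v w by simp
  show "monic (ann A v * ann A w)" using ann_spec(1)[OF A v] ann_spec(1)[OF A w] by (simp add: monic_mult)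
  fix h
  define f where "f = ann A v"
  define g where "g = ann A w"
  have split: "\<And>q. poly_mat q A *\<^sub>v (v + w) = poly_mat q A *\<^sub>v v + poly_mat q A *\<^sub>v w"
    by (rule mult_add_distrib_mat_vec[OF poly_mat_carrier[OF A] v w])
  have fv: "\<And>q. poly_mat q A *\<^sub>v v = 0\<^sub>v n \<longleftrightarrow> f dvd q" unfolding f_def by (rule ann_spec(2)[OF A v])
  have gw: "\<And>q. poly_mat q A *\<^sub>v w = 0\<^sub>v n \<longleftrightarrow> g dvd q" unfolding g_def by (rule ann_spec(2)[OF A w])
  have cp': "cop f g" using cp unfolding f_def g_def .
  have mv: "\<And>p q. poly_mat (p * q) A *\<^sub>v v = poly_mat p A *\<^sub>v (poly_mat q A *\<^sub>v v)"
    by (rule poly_mat_mult_vec[OF A v])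
  have mw: "\<And>p q. poly_mat (p * q) A *\<^sub>v w = poly_mat p A *\<^sub>v (poly_mat q A *\<^sub>v w)"
    by (rule poly_mat_mult_vec[OF A w])
  have z: "\<And>p. poly_mat p A *\<^sub>v 0\<^sub>v n = 0\<^sub>v n" using A by simp
  have cv: "\<And>q. poly_mat q A *\<^sub>v v \<in> carrier_vec n" "\<And>q. poly_mat q A *\<^sub>v w \<in> carrier_vec n"
    using A by auto
  show "poly_mat h A *\<^sub>v (v + w) = 0\<^sub>v n \<longleftrightarrow> f * g dvd h"
  proof
    assume h: "poly_mat h A *\<^sub>v (v + w) = 0\<^sub>v n"
    have sum0: "poly_mat h A *\<^sub>v v + poly_mat h A *\<^sub>v w = 0\<^sub>v n" using h split by simp
    have "poly_mat g A *\<^sub>v (poly_mat h A *\<^sub>v v + poly_mat h A *\<^sub>v w) = 0\<^sub>v n" unfolding sum0 z ..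
    hence "poly_mat g A *\<^sub>v (poly_mat h A *\<^sub>v v) + poly_mat g A *\<^sub>v (poly_mat h A *\<^sub>v w) = 0\<^sub>v n"
      by (subst (asm) mult_add_distrib_mat_vec[OF poly_mat_carrier[OF A] cv(1) cv(2)])
    moreover have "poly_mat g A *\<^sub>v (poly_mat h A *\<^sub>v w) = 0\<^sub>v n"
      unfolding mw[symmetric] gw by simp
    ultimately have "poly_mat g A *\<^sub>v (poly_mat h A *\<^sub>v v) = 0\<^sub>v n" using cv(1) A by simp
    hence "f dvd g * h" unfolding mv[symmetric] fv .
    hence fh: "f dvd h" using cop_dvd_mult[OF cp'] by blast
    have "poly_mat f A *\<^sub>v (poly_mat h A *\<^sub>v v + poly_mat h A *\<^sub>v w) = 0\<^sub>v n" unfolding sum0 z ..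
    hence "poly_mat f A *\<^sub>v (poly_mat h A *\<^sub>v v) + poly_mat f A *\<^sub>v (poly_mat h A *\<^sub>v w) = 0\<^sub>v n"
      by (subst (asm) mult_add_distrib_mat_vec[OF poly_mat_carrier[OF A] cv(1) cv(2)])
    moreover have "poly_mat f A *\<^sub>v (poly_mat h A *\<^sub>v v) = 0\<^sub>v n"
      unfolding mv[symmetric] fv by simp
    ultimately have "poly_mat f A *\<^sub>v (poly_mat h A *\<^sub>v w) = 0\<^sub>v n" using cv(2) A by simp
    hence "g dvd f * h" unfolding mw[symmetric] gw .
    hence gh: "g dvd h" using cop_dvd_mult[OF cop_sym[OF cp']] by blast
    show "f * g dvd h" by (rule cop_mult_dvd[OF cp' fh gh])
  next
    assume fg: "f * g dvd h"
    have "f dvd f * g" "g dvd f * g" by auto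
    hence "f dvd h" "g dvd h" using fg dvd_trans by blast+
    hence "poly_mat h A *\<^sub>v v = 0\<^sub>v n" "poly_mat h A *\<^sub>v w = 0\<^sub>v n" using fv gw by auto
    thus "poly_mat h A *\<^sub>v (v + w) = 0\<^sub>v n" unfolding split by simp
  qed
qed

lemma mat_vec_unit: fixes M :: "'a :: field mat" assumes M: "M \<in> carrier_mat n n" and i: "i < n" and j: "j < n"
  shows "(M *\<^sub>v unit_vec n j) $ i = M $$ (i,j)"
proof -
  have "(M *\<^sub>v unit_vec n j) $ i = (\<Sum>k<n. M $$ (i,k) * unit_vec n j $ k)"
    by (rule mat_vec_index[OF M _ i], auto)
  also have "\<dots> = (\<Sum>k<n. if k = j then M $$ (i,j) else 0)"
    by (intro sum.cong refl, auto simp: unit_vec_def)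
  also have "\<dots> = M $$ (i,j)" using j by (subst sum.delta, auto)
  finally show ?thesis .
qed

lemma mat_zero_by_vecs: fixes M :: "'a :: field mat" assumes M: "M \<in> carrier_mat n n"
  and z: "\<And>w. w \<in> carrier_vec n \<Longrightarrow> M *\<^sub>v w = 0\<^sub>v n"
  shows "M = 0\<^sub>m n n"
proof (rule eq_matI)
  fix i j assume "i < dim_row (0\<^sub>m n n :: 'a mat)" "j < dim_col (0\<^sub>m n n :: 'a mat)"
  hence i: "i < n" and j: "j < n" by auto
  have "M $$ (i,j) = (M *\<^sub>v unit_vec n j) $ i" by (rule mat_vec_unit[OF M i j, symmetric])
  also have "\<dots> = 0" unfolding z[OF unit_vec_carrier] using i by simp
  finally show "M $$ (i,j) = 0\<^sub>m n n $$ (i,j)" using i j by simp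
qed (insert M, auto)

lemma max_ann: fixes A :: "'a :: field mat"
  assumes A: "A \<in> carrier_mat n n"
  shows "\<exists>v \<in> carrier_vec n. \<forall>w \<in> carrier_vec n. ann A w dvd ann A v"
proof -
  let ?S = "(\<lambda>v. degree (ann A v)) ` carrier_vec n"
  have fin: "finite ?S" by (rule finite_subset[of _ "{..n}"], insert ann_degree[OF A], auto)
  have ne: "?S \<noteq> {}" using zero_carrier_vec[of n] by blast
  from Max_in[OF fin ne] obtain v where v: "v \<in> carrier_vec n" and dv: "degree (ann A v) = Max ?S" by auto
  show ?thesis
  proof (intro bexI[OF _ v] ballI)
    fix w :: "'a vec" assume w: "w \<in> carrier_vec n"
    show "ann A w dvd ann A v"
    proof (rule ccontr)
      assume nd: "\<not> ?thesis"
      from key_split[OF ann_spec(1)[OF A v] ann_spec(1)[OF A w] nd] obtain f1 f2 g1 g2 where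
        s: "monic f1" "monic f2" "monic g1" "monic g2" "ann A v = f1 * f2" "ann A w = g1 * g2"
        "cop f1 g1" "degree f2 < degree g1" by blast
      define v' where "v' = poly_mat f2 A *\<^sub>v v"
      define w' where "w' = poly_mat g2 A *\<^sub>v w"
      have v': "v' \<in> carrier_vec n" "ann A v' = f1" unfolding v'_def
        using A apply simp
        by (rule ann_quot[OF A v _ s(2) s(1)], insert s(5), simp add: mult.commute)
      have w': "w' \<in> carrier_vec n" "ann A w' = g1" unfolding w'_def
        using A apply simp
        by (rule ann_quot[OF A w _ s(4) s(3)], insert s(6), simp add: mult.commute)
      have u: "ann A (v' + w') = f1 * g1" using ann_sum[OF A v'(1) w'(1)] v'(2) w'(2) s(7) by simp
      have "v' + w' \<in> carrier_vec n" using v' w' by simp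
      hence "degree (ann A (v' + w')) \<in> ?S" by auto
      hence "degree (ann A (v' + w')) \<le> degree (ann A v)" unfolding dv using fin by simp
      moreover have "degree (ann A (v' + w')) = degree f1 + degree g1" unfolding u
        using s by (subst degree_mult_eq, auto)
      moreover have "degree (ann A v) = degree f1 + degree f2" unfolding s(5)
        using s by (subst degree_mult_eq, auto)
      ultimately show False using s(8) by simp
    qed
  qed
qed

lemma minpoly_props: fixes A :: "'a :: field mat"
  assumes A: "A \<in> carrier_mat n n" and v: "v \<in> carrier_vec n"
  and max: "\<And>w. w \<in> carrier_vec n \<Longrightarrow> ann A w dvd ann A v"
  shows "poly_mat (ann A v) A = 0\<^sub>m n n"
    "\<And>f. poly_mat f A = 0\<^sub>m n n \<longleftrightarrow> ann A v dvd f"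
    "min_poly A = ann A v"
proof -
  let ?m = "ann A v"
  have zero: "poly_mat f A = 0\<^sub>m n n" if "?m dvd f" for f
  proof (rule mat_zero_by_vecs[OF poly_mat_carrier[OF A]])
    fix w :: "'a vec" assume w: "w \<in> carrier_vec n"
    have "ann A w dvd f" using max[OF w] that dvd_trans by blast
    thus "poly_mat f A *\<^sub>v w = 0\<^sub>v n" using ann_spec(2)[OF A w] by simp
  qed
  show m0: "poly_mat ?m A = 0\<^sub>m n n" by (rule zero, simp)
  show iff: "\<And>f. poly_mat f A = 0\<^sub>m n n \<longleftrightarrow> ?m dvd f"
  proof
    fix f assume "poly_mat f A = 0\<^sub>m n n"
    hence "poly_mat f A *\<^sub>v v = 0\<^sub>v n" using v by simp
    thus "?m dvd f" using ann_spec(2)[OF A v] by simp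
  qed (rule zero)
  show "min_poly A = ?m" unfolding min_poly_def
  proof (rule the_equality)
    show "monic ?m \<and> (\<forall>f. poly_mat f A = 0\<^sub>m (dim_row A) (dim_row A) \<longleftrightarrow> ?m dvd f)"
      using ann_spec(1)[OF A v] iff A by simp
    fix p assume p: "monic p \<and> (\<forall>f. poly_mat f A = 0\<^sub>m (dim_row A) (dim_row A) \<longleftrightarrow> p dvd f)"
    hence p': "\<And>f. poly_mat f A = 0\<^sub>m n n \<longleftrightarrow> p dvd f" using A by simp
    show "p = ?m"
    proof (rule monic_dvd_antisym)
      show "monic p" "monic ?m" using p ann_spec(1)[OF A v] by auto
      show "p dvd ?m" using p' m0 by simp
      show "?m dvd p" using p'[of p] iff[of p] by simp
    qed
  qed
qed

lemma ann_deg_pos: fixes A :: "'a :: field mat"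
  assumes A: "A \<in> carrier_mat n n" and v: "v \<in> carrier_vec n" and n: "n \<ge> 1"
  and max: "\<And>w. w \<in> carrier_vec n \<Longrightarrow> ann A w dvd ann A v"
  shows "degree (ann A v) \<ge> 1"
proof (rule ccontr)
  assume "\<not> ?thesis"
  hence "degree (ann A v) = 0" by simp
  hence "ann A v = 1" using ann_spec(1)[OF A v] monic_degree_0 by blast
  hence "poly_mat 1 A = 0\<^sub>m n n" using minpoly_props(1)[OF A v max] by simp
  hence "poly_mat 1 A *\<^sub>v unit_vec n 0 = 0\<^sub>v n" by simp
  hence "unit_vec n 0 = (0\<^sub>v n :: 'a vec)" using poly_mat_1_vec[OF A, of "unit_vec n 0"] by simp
  hence "unit_vec n 0 $ 0 = (0\<^sub>v n :: 'a vec) $ 0" by simp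
  thus False using n by simp
qed

lemma mat_mult_index: "X \<in> carrier_mat a b \<Longrightarrow> Y \<in> carrier_mat b c \<Longrightarrow> i < a \<Longrightarrow> j < c \<Longrightarrow>
  (X * Y) $$ (i,j) = (\<Sum>k<b. X $$ (i,k) * Y $$ (k,j))"
  by (auto simp: scalar_prod_def lessThan_atLeast0 intro!: sum.cong)

lemma mat_vec_unit': fixes M :: "'a :: field mat" assumes M: "M \<in> carrier_mat r c" and i: "i < r" and j: "j < c"
  shows "(M *\<^sub>v unit_vec c j) $ i = M $$ (i,j)"
proof -
  have "(M *\<^sub>v unit_vec c j) $ i = (\<Sum>k<c. M $$ (i,k) * unit_vec c j $ k)"
    by (rule mat_vec_index[OF M _ i], auto)
  also have "\<dots> = (\<Sum>k<c. if k = j then M $$ (i,j) else 0)"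
    by (intro sum.cong refl, auto simp: unit_vec_def)
  also have "\<dots> = M $$ (i,j)" using j by (subst sum.delta, auto)
  finally show ?thesis .
qed

lemma mat_eq_by_vecs: fixes M :: "'a :: field mat"
  assumes M: "M \<in> carrier_mat r c" and M': "M' \<in> carrier_mat r c"
  and eq: "\<And>x. x \<in> carrier_vec c \<Longrightarrow> M *\<^sub>v x = M' *\<^sub>v x"
  shows "M = M'"
proof (rule eq_matI)
  fix i j assume "i < dim_row M'" "j < dim_col M'"
  hence i: "i < r" and j: "j < c" using M' by auto
  show "M $$ (i,j) = M' $$ (i,j)"
    using mat_vec_unit'[OF M i j] mat_vec_unit'[OF M' i j] eq[OF unit_vec_carrier[of c j]] by simp
qed (insert M M', auto)

lemma pow_add_vec: assumes A: "A \<in> carrier_mat n n" and x: "x \<in> carrier_vec n"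
  shows "A ^\<^sub>m k *\<^sub>v (A ^\<^sub>m j *\<^sub>v x) = A ^\<^sub>m (k + j) *\<^sub>v x"
proof (induct k)
  case 0
  then show ?case using A x by simp
next
  case (Suc k)
  have "A ^\<^sub>m Suc k *\<^sub>v (A ^\<^sub>m j *\<^sub>v x) = A *\<^sub>v (A ^\<^sub>m k *\<^sub>v (A ^\<^sub>m j *\<^sub>v x))"
    by (rule pow_mat_Suc_vec[OF A], insert A, simp)
  also have "\<dots> = A *\<^sub>v (A ^\<^sub>m (k + j) *\<^sub>v x)" unfolding Suc ..
  also have "\<dots> = A ^\<^sub>m Suc (k + j) *\<^sub>v x" by (rule pow_mat_Suc_vec[OF A x, symmetric])
  finally show ?case by simp
qed

definition comp :: "'a :: field poly \<Rightarrow> nat \<Rightarrow> 'a mat" where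
  "comp m d = mat d d (\<lambda>(i,j). if Suc j < d then (if i = Suc j then 1 else 0) else - coeff m i)"

definition phi :: "'a :: field mat \<Rightarrow> nat \<Rightarrow> 'a vec \<Rightarrow> 'a mat" where
  "phi A d l = mat d (dim_row A) (\<lambda>(k,i). (transpose_mat (A ^\<^sub>m k) *\<^sub>v l) $ i)"

locale cycdata =
  fixes A :: "'a :: field mat" and n :: nat and v :: "'a vec" and m :: "'a poly"
  assumes A: "A \<in> carrier_mat n n" and v: "v \<in> carrier_vec n" and m_ann: "ann A v = m"
   and m0: "poly_mat m A = 0\<^sub>m n n" and dpos: "degree m \<ge> 1"
begin

abbreviation "d \<equiv> degree m"
abbreviation "K \<equiv> kmat A v d"
abbreviation "D \<equiv> comp m d"

lemma monic_m: "monic m" using ann_spec(1)[OF A v] m_ann by simp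

lemma d_le: "d \<le> n" using ann_degree[OF A v] m_ann by simp

lemma K: "K \<in> carrier_mat n d" using A by simp

lemma D: "D \<in> carrier_mat d d" unfolding comp_def by simp

lemma K_dims[simp]: "dim_row K = n" "dim_col K = d" using A by (auto simp: kmat_def)

lemma K_col: "j < d \<Longrightarrow> col K j = A ^\<^sub>m j *\<^sub>v v"
  using A by (intro eq_vecI, auto simp: kmat_def)

lemma K_index: "i < n \<Longrightarrow> j < d \<Longrightarrow> K $$ (i,j) = (A ^\<^sub>m j *\<^sub>v v) $ i"
  using A by (simp add: kmat_def)

lemma K_inj: "inj_mat K"
  unfolding inj_mat_def
proof (intro ballI impI)
  fix c assume c: "c \<in> carrier_vec (dim_col K)" and Kc: "K *\<^sub>v c = 0\<^sub>v (dim_row K)"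
  from c K have c: "c \<in> carrier_vec d" by simp
  define F where "F = (\<Sum>j<d. monom (c $ j) j)"
  have "poly_mat F A *\<^sub>v v = 0\<^sub>v n" using Kc K kmat_poly[OF A v c] unfolding F_def by simp
  hence dvd: "m dvd F" using ann_spec(2)[OF A v] m_ann by simp
  have F0: "F = 0"
  proof (rule ccontr)
    assume F0: "F \<noteq> 0"
    have "degree F \<le> d - 1" unfolding F_def by (rule degree_le, auto simp: coeff_monsum)
    moreover have "d \<le> degree F" by (rule dvd_imp_degree_le[OF dvd F0])
    ultimately show False using dpos by simp
  qed
  show "c = 0\<^sub>v (dim_col K)"
  proof (intro eq_vecI)
    fix k assume "k < dim_vec (0\<^sub>v (dim_col K) :: 'a vec)"
    hence k: "k < d" using K by simp
    have "c $ k = coeff F k" unfolding F_def coeff_monsum using k by simp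
    thus "c $ k = 0\<^sub>v (dim_col K) $ k" using F0 k K by simp
  qed (insert c K, auto)
qed

lemma powd: assumes x: "x \<in> carrier_vec n" and i: "i < n"
  shows "(A ^\<^sub>m d *\<^sub>v x) $ i = - (\<Sum>k<d. coeff m k * (A ^\<^sub>m k *\<^sub>v x) $ i)"
proof -
  have "(poly_mat m A *\<^sub>v x) $ i = (\<Sum>k<Suc d. coeff m k * (A ^\<^sub>m k *\<^sub>v x) $ i)"
    by (rule poly_mat_expand[OF A x i], simp add: coeff_eq_0)
  also have "\<dots> = (\<Sum>k<d. coeff m k * (A ^\<^sub>m k *\<^sub>v x) $ i) + (A ^\<^sub>m d *\<^sub>v x) $ i"
    using monic_m by simp
  finally have "0 = (\<Sum>k<d. coeff m k * (A ^\<^sub>m k *\<^sub>v x) $ i) + (A ^\<^sub>m d *\<^sub>v x) $ i"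
    using m0 x i by simp
  thus ?thesis by (simp add: eq_neg_iff_add_eq_0 add.commute)
qed

lemma AK: "A * K = K * D"
proof (rule eq_matI)
  fix i j assume "i < dim_row (K * D)" "j < dim_col (K * D)"
  hence i: "i < n" and j: "j < d" using K D by auto
  have "(A * K) $$ (i,j) = (\<Sum>k<n. A $$ (i,k) * (A ^\<^sub>m j *\<^sub>v v) $ k)"
    by (subst mat_mult_index[OF A K i j], rule sum.cong, auto simp: K_index j)
  also have "\<dots> = (A *\<^sub>v (A ^\<^sub>m j *\<^sub>v v)) $ i" by (rule mat_vec_index[symmetric, OF A _ i], insert A, simp)
  also have "\<dots> = (A ^\<^sub>m Suc j *\<^sub>v v) $ i" by (subst pow_mat_Suc_vec[OF A v], rule refl)
  finally have l: "(A * K) $$ (i,j) = (A ^\<^sub>m Suc j *\<^sub>v v) $ i" .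
  have r: "(K * D) $$ (i,j) = (\<Sum>k<d. (A ^\<^sub>m k *\<^sub>v v) $ i * D $$ (k,j))"
    by (subst mat_mult_index[OF K D i j], intro sum.cong refl, simp add: K_index i)
  show "(A * K) $$ (i,j) = (K * D) $$ (i,j)"
  proof (cases "Suc j < d")
    case True
    have "(\<Sum>k<d. (A ^\<^sub>m k *\<^sub>v v) $ i * D $$ (k,j)) = (\<Sum>k<d. if k = Suc j then (A ^\<^sub>m Suc j *\<^sub>v v) $ i else 0)"
      using True j by (intro sum.cong refl, auto simp: comp_def)
    also have "\<dots> = (A ^\<^sub>m Suc j *\<^sub>v v) $ i" using True by (subst sum.delta, auto)
    finally show ?thesis using l r by simp
  next
    case False
    hence jd: "Suc j = d" using j by simp
    have "(\<Sum>k<d. (A ^\<^sub>m k *\<^sub>v v) $ i * D $$ (k,j)) = (\<Sum>k<d. - (coeff m k * (A ^\<^sub>m k *\<^sub>v v) $ i))"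
      using False j by (intro sum.cong refl, auto simp: comp_def)
    also have "\<dots> = (A ^\<^sub>m Suc j *\<^sub>v v) $ i" unfolding jd powd[OF v i] by (simp add: sum_negf)
    finally show ?thesis using l r by simp
  qed
qed (insert A K D, auto)

lemma phi_carrier: "phi A d l \<in> carrier_mat d n" unfolding phi_def using A by simp

lemma phi_dims[simp]: "dim_row (phi A d l) = d" "dim_col (phi A d l) = n" unfolding phi_def using A by auto

lemma phi_apply: assumes l: "l \<in> carrier_vec n" and x: "x \<in> carrier_vec n" and k: "k < d"
  shows "(phi A d l *\<^sub>v x) $ k = l \<bullet> (A ^\<^sub>m k *\<^sub>v x)"
proof -
  have "(phi A d l *\<^sub>v x) $ k = row (phi A d l) k \<bullet> x" by (subst index_mult_mat_vec, insert k phi_carrier[of l], auto)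
  also have "row (phi A d l) k = transpose_mat (A ^\<^sub>m k) *\<^sub>v l"
  proof -
    have Ak: "A ^\<^sub>m k \<in> carrier_mat n n" using A by simp
    have "row (phi A d l) k = vec n (\<lambda>i. (transpose_mat (A ^\<^sub>m k) *\<^sub>v l) $ i)"
      unfolding phi_def using k A by simp
    also have "\<dots> = transpose_mat (A ^\<^sub>m k) *\<^sub>v l" using Ak by (intro eq_vecI, auto)
    finally show ?thesis .
  qed
  also have "\<dots> \<bullet> x = l \<bullet> (A ^\<^sub>m k *\<^sub>v x)" by (rule transpose_vec_mult_scalar[of _ n n], insert A x l, auto)
  finally show ?thesis .
qed

lemma scalar_powd: assumes l: "l \<in> carrier_vec n" and x: "x \<in> carrier_vec n"
  shows "l \<bullet> (A ^\<^sub>m d *\<^sub>v x) = - (\<Sum>k<d. coeff m k * (l \<bullet> (A ^\<^sub>m k *\<^sub>v x)))"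
proof -
  have "l \<bullet> (A ^\<^sub>m d *\<^sub>v x) = (\<Sum>i<n. l $ i * (A ^\<^sub>m d *\<^sub>v x) $ i)"
    using l A by (simp add: scalar_prod_def lessThan_atLeast0)
  also have "\<dots> = (\<Sum>i<n. l $ i * (- (\<Sum>k<d. coeff m k * (A ^\<^sub>m k *\<^sub>v x) $ i)))"
    by (intro sum.cong refl, simp add: powd[OF x])
  also have "\<dots> = - (\<Sum>k<d. coeff m k * (\<Sum>i<n. l $ i * (A ^\<^sub>m k *\<^sub>v x) $ i))"
    by (simp add: sum_distrib_left sum_negf sum.swap[of _ "{..<n}"] algebra_simps)
  also have "\<dots> = - (\<Sum>k<d. coeff m k * (l \<bullet> (A ^\<^sub>m k *\<^sub>v x)))"
    using l A by (simp add: scalar_prod_def lessThan_atLeast0)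
  finally show ?thesis .
qed

lemma phiA: assumes l: "l \<in> carrier_vec n" shows "phi A d l * A = transpose_mat D * phi A d l"
proof (rule mat_eq_by_vecs)
  show "phi A d l * A \<in> carrier_mat d n" by (rule mult_carrier_mat[OF phi_carrier A])
  show "transpose_mat D * phi A d l \<in> carrier_mat d n" by (rule mult_carrier_mat[OF _ phi_carrier], insert D, simp)
  fix x :: "'a vec" assume x: "x \<in> carrier_vec n"
  have Ax: "A *\<^sub>v x \<in> carrier_vec n" using A x by simp
  have px: "phi A d l *\<^sub>v x \<in> carrier_vec d" using phi_carrier[of l] x by simp
  show "(phi A d l * A) *\<^sub>v x = (transpose_mat D * phi A d l) *\<^sub>v x"
  proof (intro eq_vecI)
    fix k assume "k < dim_vec ((transpose_mat D * phi A d l) *\<^sub>v x)"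
    hence k: "k < d" using D by simp
    have "((phi A d l * A) *\<^sub>v x) $ k = (phi A d l *\<^sub>v (A *\<^sub>v x)) $ k"
      by (subst assoc_mult_mat_vec[OF phi_carrier A x], simp)
    also have "\<dots> = l \<bullet> (A ^\<^sub>m Suc k *\<^sub>v x)"
      unfolding phi_apply[OF l Ax k] using pow_add_vec[OF A x, of k 1] A x by simp
    finally have lhs: "((phi A d l * A) *\<^sub>v x) $ k = l \<bullet> (A ^\<^sub>m Suc k *\<^sub>v x)" .
    have "((transpose_mat D * phi A d l) *\<^sub>v x) $ k = (transpose_mat D *\<^sub>v (phi A d l *\<^sub>v x)) $ k"
      by (subst assoc_mult_mat_vec[OF _ phi_carrier x], insert D, auto)
    also have "\<dots> = (\<Sum>j<d. transpose_mat D $$ (k,j) * (phi A d l *\<^sub>v x) $ j)"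
      by (rule mat_vec_index[OF _ px k], insert D, simp)
    also have "\<dots> = (\<Sum>j<d. D $$ (j,k) * (l \<bullet> (A ^\<^sub>m j *\<^sub>v x)))"
      using k D by (intro sum.cong refl, subst phi_apply[OF l x], auto)
    finally have rhs: "((transpose_mat D * phi A d l) *\<^sub>v x) $ k = (\<Sum>j<d. D $$ (j,k) * (l \<bullet> (A ^\<^sub>m j *\<^sub>v x)))" .
    show "((phi A d l * A) *\<^sub>v x) $ k = ((transpose_mat D * phi A d l) *\<^sub>v x) $ k"
    proof (cases "Suc k < d")
      case True
      have "(\<Sum>j<d. D $$ (j,k) * (l \<bullet> (A ^\<^sub>m j *\<^sub>v x))) = (\<Sum>j<d. if j = Suc k then l \<bullet> (A ^\<^sub>m Suc k *\<^sub>v x) else 0)"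
        using True k by (intro sum.cong refl, auto simp: comp_def)
      also have "\<dots> = l \<bullet> (A ^\<^sub>m Suc k *\<^sub>v x)" using True by (subst sum.delta, auto)
      finally show ?thesis using lhs rhs by simp
    next
      case False
      hence kd: "Suc k = d" using k by simp
      have "(\<Sum>j<d. D $$ (j,k) * (l \<bullet> (A ^\<^sub>m j *\<^sub>v x))) = (\<Sum>j<d. - (coeff m j * (l \<bullet> (A ^\<^sub>m j *\<^sub>v x))))"
        using False k by (intro sum.cong refl, auto simp: comp_def)
      also have "\<dots> = l \<bullet> (A ^\<^sub>m Suc k *\<^sub>v x)" unfolding kd scalar_powd[OF l x] by (simp add: sum_negf)
      finally show ?thesis using lhs rhs by simp
    qed
  qed (insert D, auto)
qed

end

lemma hcat_col: assumes K: "K \<in> carrier_mat n d" and N: "N \<in> carrier_mat n k"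
  shows "j < d \<Longrightarrow> col (hcat K N) j = col K j" "d \<le> j \<Longrightarrow> j < d + k \<Longrightarrow> col (hcat K N) j = col N (j - d)"
  using K N by (auto intro!: eq_vecI simp: hcat_def)

lemma mat_eq_by_cols: assumes M: "M \<in> carrier_mat r c" and M': "M' \<in> carrier_mat r c"
  and eq: "\<And>j. j < c \<Longrightarrow> col M j = col M' j" shows "M = M'"
proof (rule eq_matI)
  fix i j assume "i < dim_row M'" "j < dim_col M'"
  hence i: "i < r" and j: "j < c" using M' by auto
  have "M $$ (i,j) = col M j $ i" using M i j by simp
  also have "\<dots> = col M' j $ i" using eq[OF j] by simp
  also have "\<dots> = M' $$ (i,j)" using M' i j by simp
  finally show "M $$ (i,j) = M' $$ (i,j)" .
qed (insert M M', auto)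

lemma inj_matD: "inj_mat M \<Longrightarrow> M \<in> carrier_mat r c \<Longrightarrow> x \<in> carrier_vec c \<Longrightarrow> M *\<^sub>v x = 0\<^sub>v r \<Longrightarrow> x = 0\<^sub>v c"
  unfolding inj_mat_def by auto

lemma inj_mat_cancel: fixes M :: "'a :: field mat"
  assumes "inj_mat M" "M \<in> carrier_mat r c" "x \<in> carrier_vec c" "y \<in> carrier_vec c" "M *\<^sub>v x = M *\<^sub>v y"
  shows "x = y"
proof -
  have "M *\<^sub>v (x - y) = 0\<^sub>v r" using assms by (simp add: mult_minus_distrib_mat_vec)
  from inj_matD[OF assms(1,2) _ this] assms(3,4) have "x - y = 0\<^sub>v c" by simp
  show ?thesis
  proof (rule eq_vecI)
    fix i assume "i < dim_vec y"
    hence i: "i < c" using assms(4) by simp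
    have "(x - y) $ i = 0" using \<open>x - y = 0\<^sub>v c\<close> i by simp
    thus "x $ i = y $ i" using i assms(3,4) by simp
  qed (insert assms(3,4), simp)
qed

context cycdata
begin

lemma H_carrier: "phi A d l * K \<in> carrier_mat d d" by (rule mult_carrier_mat[OF phi_carrier K])

lemma H_index: assumes l: "l \<in> carrier_vec n" and k: "k < d" and j: "j < d"
  shows "(phi A d l * K) $$ (k,j) = l \<bullet> (A ^\<^sub>m (k+j) *\<^sub>v v)"
proof -
  have "(phi A d l * K) $$ (k,j) = row (phi A d l) k \<bullet> col K j" using k j by simp
  also have "\<dots> = (phi A d l *\<^sub>v col K j) $ k" using k by simp
  also have "\<dots> = l \<bullet> (A ^\<^sub>m k *\<^sub>v (A ^\<^sub>m j *\<^sub>v v))" unfolding K_col[OF j]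
    by (rule phi_apply[OF l _ k], insert A, simp)
  also have "\<dots> = l \<bullet> (A ^\<^sub>m (k+j) *\<^sub>v v)" by (simp add: pow_add_vec[OF A v])
  finally show ?thesis .
qed

lemma H_sym: assumes l: "l \<in> carrier_vec n" shows "transpose_mat (phi A d l * K) = phi A d l * K"
proof -
  have e: "\<And>i j. i < d \<Longrightarrow> j < d \<Longrightarrow> (phi A d l * K) $$ (j,i) = (phi A d l * K) $$ (i,j)"
    by (simp only: H_index[OF l] add.commute)
  show ?thesis by (rule eq_matI, insert H_carrier[of l] e, auto simp del: index_mult_mat)
qed

lemma H_inj: assumes l: "l \<in> carrier_vec n"
  and lv: "\<And>j. j < d \<Longrightarrow> l \<bullet> (A ^\<^sub>m j *\<^sub>v v) = (if j = d - 1 then 1 else 0)"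
  shows "inj_mat (phi A d l * K)"
  by (rule hankel_inj[OF H_carrier, where h = "\<lambda>t. l \<bullet> (A ^\<^sub>m t *\<^sub>v v)"], auto simp del: index_mult_mat simp: H_index[OF l] lv)

lemma HD: assumes l: "l \<in> carrier_vec n"
  shows "(phi A d l * K) * D = transpose_mat D * (phi A d l * K)"
proof -
  have P: "phi A d l \<in> carrier_mat d n" by (rule phi_carrier)
  have DT: "transpose_mat D \<in> carrier_mat d d" using D by simp
  have "(phi A d l * K) * D = phi A d l * (K * D)" by (rule assoc_mult_mat[OF P K D])
  also have "\<dots> = phi A d l * (A * K)" unfolding AK ..
  also have "\<dots> = (phi A d l * A) * K" by (rule assoc_mult_mat[OF P A K, symmetric])
  also have "\<dots> = (transpose_mat D * phi A d l) * K" unfolding phiA[OF l] ..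
  also have "\<dots> = transpose_mat D * (phi A d l * K)" by (rule assoc_mult_mat[OF DT P K])
  finally show ?thesis .
qed

end

lemma neg_add_vec: fixes a :: "'a :: field vec"
  shows "a \<in> carrier_vec n \<Longrightarrow> b \<in> carrier_vec n \<Longrightarrow> (-1) \<cdot>\<^sub>v a + b = b - a"
  by (intro eq_vecI, auto)

context cycdata
begin

lemma D_dims[simp]: "dim_row D = d" "dim_col D = d" using D by auto

lemma decomp: "\<exists>P Q Y G X. P \<in> carrier_mat n n \<and> Q \<in> carrier_mat n n \<and> P * Q = 1\<^sub>m n \<and> Q * P = 1\<^sub>m n
  \<and> Y \<in> carrier_mat (n - d) (n - d) \<and> Q * A * P = four_block_mat D (0\<^sub>m d (n - d)) (0\<^sub>m (n - d) d) Y
  \<and> G \<in> carrier_mat d d \<and> transpose_mat G = G \<and> inj_mat G \<and> G * D = transpose_mat D * G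
  \<and> X \<in> carrier_mat d (n - d) \<and> X * Y = transpose_mat D * X \<and> (n - d \<ge> 1 \<longrightarrow> X \<noteq> 0\<^sub>m d (n - d))"
proof -
  define k where "k = n - d"
  have dn: "d + k = n" using d_le unfolding k_def by simp
  have dk: "n - d = k" unfolding k_def ..
  note Kc = K
  from extend_inj[OF Kc K_inj d_le] obtain M where M: "M \<in> carrier_mat n k"
    and injP0: "inj_mat (hcat K M)" unfolding k_def by blast
  have P0: "hcat K M \<in> carrier_mat n n" using hcat_carrier[OF Kc M] dn by simp
  from inj_mat_inverse[OF P0 injP0] obtain R0 where R0: "R0 \<in> carrier_mat n n"
    "hcat K M * R0 = 1\<^sub>m n" "R0 * hcat K M = 1\<^sub>m n" by blast
  define l0 where "l0 = row R0 (d - 1)"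
  have l0: "l0 \<in> carrier_vec n" using R0 unfolding l0_def by (intro carrier_vecI, auto)
  have l0v: "l0 \<bullet> (A ^\<^sub>m j *\<^sub>v v) = (if j = d - 1 then 1 else 0)" if j: "j < d" for j
  proof -
    have "(R0 * hcat K M) $$ (d - 1, j) = row R0 (d - 1) \<bullet> col (hcat K M) j"
      using R0 P0 j d_le dpos by (subst index_mult_mat, auto)
    also have "col (hcat K M) j = A ^\<^sub>m j *\<^sub>v v" using hcat_col(1)[OF Kc M j] K_col[OF j] by simp
    finally show ?thesis using R0(3) j d_le dpos by (auto simp: l0_def)
  qed
  define \<Phi> where "\<Phi> = phi A d l0"
  have Pc: "\<Phi> \<in> carrier_mat d n" unfolding \<Phi>_def by (rule phi_carrier)
  define H where "H = \<Phi> * K"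
  have H: "H \<in> carrier_mat d d" unfolding H_def \<Phi>_def by (rule H_carrier)
  have injH: "inj_mat H" unfolding H_def \<Phi>_def by (rule H_inj[OF l0 l0v])
  from inj_mat_inverse[OF H injH] obtain Hi where Hi: "Hi \<in> carrier_mat d d"
    "H * Hi = 1\<^sub>m d" "Hi * H = 1\<^sub>m d" by blast
  define Z where "Z = Hi * (\<Phi> * M)"
  have Z: "Z \<in> carrier_mat d k" unfolding Z_def using Hi Pc M by simp
  define N where "N = M - K * Z"
  have N: "N \<in> carrier_mat n k" unfolding N_def by (rule minus_carrier_mat, rule mult_carrier_mat[OF Kc Z])
  have PhiN: "\<Phi> * N = 0\<^sub>m d k"
  proof -
    have "\<Phi> * N = \<Phi> * M - \<Phi> * (K * Z)" unfolding N_def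
      by (rule mult_minus_distrib_mat[OF Pc M], insert Kc Z, simp)
    also have "\<Phi> * (K * Z) = H * Z" unfolding H_def by (rule assoc_mult_mat[OF Pc Kc Z, symmetric])
    also have "\<dots> = (H * Hi) * (\<Phi> * M)" unfolding Z_def
      by (rule assoc_mult_mat[OF H Hi(1) mult_carrier_mat[OF Pc M], symmetric])
    also have "\<dots> = \<Phi> * M" unfolding Hi(2) using Pc M by simp
    finally show ?thesis using Pc M by simp
  qed
  define P where "P = hcat K N"
  have P: "P \<in> carrier_mat n n" unfolding P_def using hcat_carrier[OF Kc N] dn by simp
  have Nvec: "N *\<^sub>v y = M *\<^sub>v y - K *\<^sub>v (Z *\<^sub>v y)" if y: "y \<in> carrier_vec k" for y
    unfolding N_def using M Kc Z y by (simp add: minus_mult_distrib_mat_vec[of _ n k] assoc_mult_mat_vec[of _ n d _ k])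
  have PhiK: "\<Phi> *\<^sub>v (K *\<^sub>v x) = H *\<^sub>v x" if x: "x \<in> carrier_vec d" for x
    unfolding H_def by (rule assoc_mult_mat_vec[OF Pc Kc x, symmetric])
  have PhiNv: "\<Phi> *\<^sub>v (N *\<^sub>v y) = 0\<^sub>v d" if y: "y \<in> carrier_vec k" for y
    using assoc_mult_mat_vec[OF Pc N y, symmetric] PhiN y by simp
  have Pxy: "P *\<^sub>v (x @\<^sub>v y) = K *\<^sub>v x + N *\<^sub>v y" if "x \<in> carrier_vec d" "y \<in> carrier_vec k" for x y
    unfolding P_def by (rule hcat_mult_vec[OF Kc N that])
  have PhiP: "\<Phi> *\<^sub>v (P *\<^sub>v (x @\<^sub>v y)) = H *\<^sub>v x" if x: "x \<in> carrier_vec d" and y: "y \<in> carrier_vec k" for x y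
  proof -
    have "\<Phi> *\<^sub>v (P *\<^sub>v (x @\<^sub>v y)) = \<Phi> *\<^sub>v (K *\<^sub>v x) + \<Phi> *\<^sub>v (N *\<^sub>v y)"
      unfolding Pxy[OF x y] by (rule mult_add_distrib_mat_vec[OF Pc], insert Kc N x y, auto)
    thus ?thesis unfolding PhiK[OF x] PhiNv[OF y] using H x by simp
  qed
  have split: "c = vec_first c d @\<^sub>v vec_last c k" if "c \<in> carrier_vec n" for c
    using that dn by (metis vec_first_last_append)
  have injP: "inj_mat P" unfolding inj_mat_def
  proof (intro ballI impI)
    fix c assume c: "c \<in> carrier_vec (dim_col P)" and Pc0: "P *\<^sub>v c = 0\<^sub>v (dim_row P)"
    from c P have c: "c \<in> carrier_vec n" by simp
    define x where "x = vec_first c d"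
    define y where "y = vec_last c k"
    have x: "x \<in> carrier_vec d" and y: "y \<in> carrier_vec k" unfolding x_def y_def by auto
    have cxy: "c = x @\<^sub>v y" unfolding x_def y_def by (rule split[OF c])
    have "H *\<^sub>v x = 0\<^sub>v d" using PhiP[OF x y] Pc0 P Pc unfolding cxy[symmetric] by simp
    hence x0: "x = 0\<^sub>v d" by (rule inj_matD[OF injH H x])
    have c0: "c = 0\<^sub>v d @\<^sub>v y" using cxy x0 by simp
    have "N *\<^sub>v y = 0\<^sub>v n" using Pc0 P Pxy[OF x y] Kc N y unfolding c0 x0 by simp
    hence "M *\<^sub>v y - K *\<^sub>v (Z *\<^sub>v y) = 0\<^sub>v n" using Nvec[OF y] by simp
    moreover have "hcat K M *\<^sub>v (((-1) \<cdot>\<^sub>v (Z *\<^sub>v y)) @\<^sub>v y) = M *\<^sub>v y - K *\<^sub>v (Z *\<^sub>v y)"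
    proof -
      have Zy: "Z *\<^sub>v y \<in> carrier_vec d" using Z y by simp
      have mZy: "(-1) \<cdot>\<^sub>v (Z *\<^sub>v y) \<in> carrier_vec d" using Zy by simp
      have e: "hcat K M *\<^sub>v (((-1) \<cdot>\<^sub>v (Z *\<^sub>v y)) @\<^sub>v y) = K *\<^sub>v ((-1) \<cdot>\<^sub>v (Z *\<^sub>v y)) + M *\<^sub>v y"
        by (rule hcat_mult_vec[OF Kc M mZy y])
      have e2: "K *\<^sub>v ((-1) \<cdot>\<^sub>v (Z *\<^sub>v y)) = (-1) \<cdot>\<^sub>v (K *\<^sub>v (Z *\<^sub>v y))"
        by (rule mult_mat_vec[OF Kc Zy])
      have c1: "K *\<^sub>v (Z *\<^sub>v y) \<in> carrier_vec n" "M *\<^sub>v y \<in> carrier_vec n" using Kc Zy M y by auto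
      show ?thesis unfolding e e2 by (rule neg_add_vec[OF c1])
    qed
    ultimately have z: "hcat K M *\<^sub>v (((-1) \<cdot>\<^sub>v (Z *\<^sub>v y)) @\<^sub>v y) = 0\<^sub>v n" by simp
    have "((-1) \<cdot>\<^sub>v (Z *\<^sub>v y)) @\<^sub>v y \<in> carrier_vec n" using Z y dn by (intro carrier_vecI, auto)
    from inj_matD[OF injP0 P0 this z] have "((-1) \<cdot>\<^sub>v (Z *\<^sub>v y)) @\<^sub>v y = 0\<^sub>v n" .
    hence y0: "y = 0\<^sub>v k"
    proof (intro eq_vecI)
      fix i assume "((-1) \<cdot>\<^sub>v (Z *\<^sub>v y)) @\<^sub>v y = 0\<^sub>v n" "i < dim_vec (0\<^sub>v k :: 'a vec)"
      hence "(((-1) \<cdot>\<^sub>v (Z *\<^sub>v y)) @\<^sub>v y) $ (d + i) = 0" and i: "i < k" using dn by auto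
      thus "y $ i = 0\<^sub>v k $ i" using Z y by simp
    qed (insert y, auto)
    show "c = 0\<^sub>v (dim_col P)" unfolding cxy x0 y0 using P dn by (intro eq_vecI, auto)
  qed
  from inj_mat_inverse[OF P injP] obtain Q where Q: "Q \<in> carrier_mat n n" "P * Q = 1\<^sub>m n" "Q * P = 1\<^sub>m n" by blast
  define B where "B = Q * A * P"
  have B: "B \<in> carrier_mat n n" unfolding B_def using Q(1) A P by simp
  have colPc: "col P j \<in> carrier_vec n" for j using P by (intro carrier_vecI, simp)
  have PB: "P *\<^sub>v col B j = A *\<^sub>v col P j" if j: "j < n" for j
  proof -
    have QA: "Q * A \<in> carrier_mat n n" using Q(1) A by simp
    have "col B j = (Q * A) *\<^sub>v col P j" unfolding B_def by (rule col_mult2[OF QA P j])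
    also have "\<dots> = Q *\<^sub>v (A *\<^sub>v col P j)" by (rule assoc_mult_mat_vec[OF Q(1) A colPc])
    finally have "P *\<^sub>v col B j = P *\<^sub>v (Q *\<^sub>v (A *\<^sub>v col P j))" by simp
    also have "\<dots> = (P * Q) *\<^sub>v (A *\<^sub>v col P j)"
      by (rule assoc_mult_mat_vec[symmetric, OF P Q(1)], insert A colPc[of j], simp)
    also have "\<dots> = A *\<^sub>v col P j" unfolding Q(2) using A colPc[of j] by simp
    finally show ?thesis .
  qed
  have colBc: "col B j \<in> carrier_vec n" for j using B by (intro carrier_vecI, simp)
  have colP_low: "col P j = A ^\<^sub>m j *\<^sub>v v" if j: "j < d" for j
    unfolding P_def using hcat_col(1)[OF Kc N j] K_col[OF j] by simp
  have colP_high: "col P j = col N (j - d)" if j: "d \<le> j" "j < n" for j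
    unfolding P_def using hcat_col(2)[OF Kc N j(1)] j dn by simp
  have colB_low: "col B j = col D j @\<^sub>v 0\<^sub>v k" if j: "j < d" for j
  proof (rule inj_mat_cancel[OF injP P colBc])
    have cD: "col D j \<in> carrier_vec d" using D by (intro carrier_vecI, simp)
    show "col D j @\<^sub>v 0\<^sub>v k \<in> carrier_vec n" using cD dn by (intro carrier_vecI, auto)
    have "P *\<^sub>v (col D j @\<^sub>v 0\<^sub>v k) = K *\<^sub>v col D j + N *\<^sub>v 0\<^sub>v k" by (rule Pxy[OF cD], simp)
    also have "\<dots> = K *\<^sub>v col D j" using Kc N cD by simp
    also have "\<dots> = col (K * D) j" by (rule col_mult2[symmetric, OF Kc D j])
    also have "\<dots> = col (A * K) j" unfolding AK ..
    also have "\<dots> = A *\<^sub>v col K j" by (rule col_mult2[OF A Kc j])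
    also have "\<dots> = A *\<^sub>v col P j" using colP_low[OF j] K_col[OF j] by simp
    also have "\<dots> = P *\<^sub>v col B j" using PB j d_le by simp
    finally show "P *\<^sub>v col B j = P *\<^sub>v (col D j @\<^sub>v 0\<^sub>v k)" by simp
  qed
  have colB_high: "vec_first (col B j) d = 0\<^sub>v d" if j: "d \<le> j" "j < n" for j
  proof -
    define x where "x = vec_first (col B j) d"
    define y where "y = vec_last (col B j) k"
    have x: "x \<in> carrier_vec d" and y: "y \<in> carrier_vec k" unfolding x_def y_def by auto
    have cxy: "col B j = x @\<^sub>v y" unfolding x_def y_def by (rule split[OF colBc])
    define u where "u = col N (j - d)"
    have u: "u \<in> carrier_vec n" unfolding u_def using N by (intro carrier_vecI, simp)
    have "\<Phi> *\<^sub>v u = col (\<Phi> * N) (j - d)" unfolding u_def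
      by (rule col_mult2[symmetric, OF Pc N], insert j dn, simp)
    also have "\<dots> = 0\<^sub>v d" unfolding PhiN using j dn by simp
    finally have Phiu: "\<Phi> *\<^sub>v u = 0\<^sub>v d" .
    have "H *\<^sub>v x = \<Phi> *\<^sub>v (P *\<^sub>v col B j)" unfolding cxy by (rule PhiP[OF x y, symmetric])
    also have "\<dots> = \<Phi> *\<^sub>v (A *\<^sub>v u)" unfolding PB[OF j(2)] colP_high[OF j] u_def ..
    also have "\<dots> = (\<Phi> * A) *\<^sub>v u" by (rule assoc_mult_mat_vec[symmetric, OF Pc A u])
    also have "\<dots> = (transpose_mat D * \<Phi>) *\<^sub>v u" unfolding \<Phi>_def phiA[OF l0] ..
    also have "\<dots> = transpose_mat D *\<^sub>v (\<Phi> *\<^sub>v u)" by (rule assoc_mult_mat_vec[OF _ Pc u], insert D, simp)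
    also have "\<dots> = 0\<^sub>v d" unfolding Phiu using D by simp
    finally have "x = 0\<^sub>v d" by (rule inj_matD[OF injH H x])
    thus ?thesis unfolding x_def .
  qed
  define Y where "Y = mat k k (\<lambda>(i,j). B $$ (d + i, d + j))"
  have Y: "Y \<in> carrier_mat k k" unfolding Y_def by simp
  have Bblock: "B = four_block_mat D (0\<^sub>m d k) (0\<^sub>m k d) Y"
  proof (rule eq_matI)
    fix i j assume "i < dim_row (four_block_mat D (0\<^sub>m d k) (0\<^sub>m k d) Y)"
      "j < dim_col (four_block_mat D (0\<^sub>m d k) (0\<^sub>m k d) Y)"
    hence i: "i < n" and j: "j < n" using D Y dn by auto
    have Bij: "B $$ (i,j) = col B j $ i" using B i j by simp
    have fb: "four_block_mat D (0\<^sub>m d k) (0\<^sub>m k d) Y $$ (i,j) = (if i < d then if j < d then D $$ (i,j) else 0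
       else if j < d then 0 else Y $$ (i - d, j - d))"
      using D Y i j dn by (subst index_mat_four_block, auto)
    show "B $$ (i,j) = four_block_mat D (0\<^sub>m d k) (0\<^sub>m k d) Y $$ (i,j)"
    proof (cases "j < d")
      case True
      have "col B j $ i = (col D j @\<^sub>v 0\<^sub>v k) $ i" unfolding colB_low[OF True] ..
      also have "\<dots> = (if i < d then D $$ (i,j) else 0)" using D True i dn by (auto simp: index_append_vec)
      finally show ?thesis unfolding Bij fb using True by simp
    next
      case False
      show ?thesis
      proof (cases "i < d")
        case True
        have dj: "d \<le> j" using False by simp
        have "col B j $ i = vec_first (col B j) d $ i" using True by (simp add: vec_first_def)
        also have "\<dots> = 0" unfolding colB_high[OF dj j] using True by simp
        finally show ?thesis unfolding Bij fb using True False by simp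
      next
        case False2: False
        have "Y $$ (i - d, j - d) = B $$ (i, j)" unfolding Y_def using False False2 i j dn by simp
        thus ?thesis unfolding fb using False False2 by simp
      qed
    qed
  qed (insert B D Y dn, auto)
  have AN: "A * N = N * Y"
  proof (rule mat_eq_by_cols)
    show "A * N \<in> carrier_mat n k" "N * Y \<in> carrier_mat n k" using A N Y by auto
    fix j assume j: "j < k"
    have cY: "col Y j \<in> carrier_vec k" using Y by (intro carrier_vecI, simp)
    have colB: "col B (d + j) = 0\<^sub>v d @\<^sub>v col Y j"
    proof (rule eq_vecI)
      fix i assume "i < dim_vec (0\<^sub>v d @\<^sub>v col Y j)"
      hence i: "i < n" using Y dn by simp
      have "col B (d + j) $ i = B $$ (i, d + j)" using B i j dn by simp
      also have "\<dots> = (if i < d then 0 else Y $$ (i - d, j))" unfolding Bblock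
        using D Y i j dn by (subst index_mat_four_block, auto)
      also have "\<dots> = (0\<^sub>v d @\<^sub>v col Y j) $ i" using Y i j dn by (auto simp: index_append_vec)
      finally show "col B (d + j) $ i = (0\<^sub>v d @\<^sub>v col Y j) $ i" .
    qed (insert B Y dn, auto)
    have "col (A * N) j = A *\<^sub>v col N j" by (rule col_mult2[OF A N j])
    also have "col N j = col P (d + j)" using colP_high[of "d + j"] j dn by simp
    also have "A *\<^sub>v \<dots> = P *\<^sub>v col B (d + j)" using PB[of "d + j"] j dn by simp
    also have "\<dots> = K *\<^sub>v 0\<^sub>v d + N *\<^sub>v col Y j" unfolding colB by (rule Pxy[OF _ cY], simp)
    also have "\<dots> = N *\<^sub>v col Y j" using Kc N cY by simp
    also have "\<dots> = col (N * Y) j" by (rule col_mult2[symmetric, OF N Y j])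
    finally show "col (A * N) j = col (N * Y) j" .
  qed
  have Xgen: "phi A d l * N * Y = transpose_mat D * (phi A d l * N)" if l: "l \<in> carrier_vec n" for l
  proof -
    have Pl: "phi A d l \<in> carrier_mat d n" by (rule phi_carrier)
    have DT: "transpose_mat D \<in> carrier_mat d d" using D by simp
    have "phi A d l * N * Y = phi A d l * (N * Y)" by (rule assoc_mult_mat[OF Pl N Y])
    also have "\<dots> = phi A d l * (A * N)" unfolding AN ..
    also have "\<dots> = (phi A d l * A) * N" by (rule assoc_mult_mat[OF Pl A N, symmetric])
    also have "\<dots> = (transpose_mat D * phi A d l) * N" unfolding phiA[OF l] ..
    also have "\<dots> = transpose_mat D * (phi A d l * N)" by (rule assoc_mult_mat[OF DT Pl N])
    finally show ?thesis .
  qed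
  have Xex: "\<exists>X. X \<in> carrier_mat d k \<and> X * Y = transpose_mat D * X \<and> (k \<ge> 1 \<longrightarrow> X \<noteq> 0\<^sub>m d k)"
  proof (cases "k \<ge> 1")
    case False
    have z: "0\<^sub>v n \<in> carrier_vec n" by simp
    have c: "phi A d (0\<^sub>v n) * N \<in> carrier_mat d k" by (rule mult_carrier_mat[OF phi_carrier N])
    show ?thesis by (rule exI[of _ "phi A d (0\<^sub>v n) * N"], intro conjI c Xgen[OF z] impI, insert False, simp)
  next
    case True
    have cN: "col N 0 \<in> carrier_vec n" using N by (intro carrier_vecI, simp)
    have "col N 0 \<noteq> 0\<^sub>v n"
    proof
      assume c0: "col N 0 = 0\<^sub>v n"
      have e0: "unit_vec k 0 \<in> carrier_vec k" by simp
      have z0: "0\<^sub>v d \<in> carrier_vec d" by simp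
      have Ne: "N *\<^sub>v unit_vec k 0 = col N 0"
      proof (rule eq_vecI)
        fix i assume "i < dim_vec (col N 0)"
        hence i: "i < n" using N by simp
        show "(N *\<^sub>v unit_vec k 0) $ i = col N 0 $ i"
          unfolding mat_vec_unit'[OF N i True[unfolded One_nat_def Suc_le_eq]] using N i True by simp
      qed (insert N, simp)
      have "P *\<^sub>v (0\<^sub>v d @\<^sub>v unit_vec k 0) = K *\<^sub>v 0\<^sub>v d + N *\<^sub>v unit_vec k 0" by (rule Pxy[OF z0 e0])
      also have "\<dots> = 0\<^sub>v n" unfolding Ne c0 using Kc by simp
      finally have Pz: "P *\<^sub>v (0\<^sub>v d @\<^sub>v unit_vec k 0) = 0\<^sub>v n" .
      have "(0\<^sub>v d @\<^sub>v unit_vec k 0 :: 'a vec) \<in> carrier_vec n" using dn by (intro carrier_vecI, simp)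
      note zz = inj_matD[OF injP P this Pz]
      have "(0\<^sub>v d @\<^sub>v unit_vec k 0 :: 'a vec) $ d = 1" using True by (simp add: index_append_vec)
      moreover have "(0\<^sub>v d @\<^sub>v unit_vec k 0 :: 'a vec) $ d = 0\<^sub>v n $ d" using zz by simp
      moreover have "(0\<^sub>v n :: 'a vec) $ d = 0" using True dn by simp
      ultimately show False by simp
    qed
    have "\<exists>i0<n. col N 0 $ i0 \<noteq> 0"
    proof (rule ccontr)
      assume "\<not> ?thesis"
      hence "col N 0 = 0\<^sub>v n" using cN N by (intro eq_vecI, auto)
      with \<open>col N 0 \<noteq> 0\<^sub>v n\<close> show False by simp
    qed
    then obtain i0 where i0: "i0 < n" "col N 0 $ i0 \<noteq> 0" by blast
    define l :: "'a vec" where "l = unit_vec n i0"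
    have l: "l \<in> carrier_vec n" unfolding l_def by simp
    define X where "X = phi A d l * N"
    have X: "X \<in> carrier_mat d k" unfolding X_def by (rule mult_carrier_mat[OF phi_carrier N])
    have d0: "0 < d" using dpos by simp
    have k0: "0 < k" using True by simp
    have "X $$ (0,0) = row (phi A d l) 0 \<bullet> col N 0" unfolding X_def using d0 k0 N by simp
    also have "\<dots> = (phi A d l *\<^sub>v col N 0) $ 0" using d0 by simp
    also have "\<dots> = l \<bullet> (A ^\<^sub>m 0 *\<^sub>v col N 0)" by (rule phi_apply[OF l cN d0])
    also have "\<dots> = col N 0 $ i0" unfolding l_def using cN i0 A by simp
    finally have X00: "X $$ (0,0) \<noteq> 0" using i0 by simp
    have "X \<noteq> 0\<^sub>m d k"
    proof
      assume "X = 0\<^sub>m d k"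
      hence "X $$ (0,0) = 0" using d0 k0 by simp
      with X00 show False by simp
    qed
    thus ?thesis using X Xgen[OF l] unfolding X_def by blast
  qed
  then obtain X where X: "X \<in> carrier_mat d k" "X * Y = transpose_mat D * X" "k \<ge> 1 \<longrightarrow> X \<noteq> 0\<^sub>m d k" by blast
  have QAP: "Q * A * P = four_block_mat D (0\<^sub>m d k) (0\<^sub>m k d) Y" using Bblock unfolding B_def .
  have Hs: "transpose_mat H = H" unfolding H_def \<Phi>_def by (rule H_sym[OF l0])
  have HDD: "H * D = transpose_mat D * H" unfolding H_def \<Phi>_def by (rule HD[OF l0])
  show ?thesis unfolding dk
    apply (rule exI[of _ P], rule exI[of _ Q], rule exI[of _ Y], rule exI[of _ H], rule exI[of _ X])
    using P Q(1) Q(2) Q(3) Y QAP H Hs injH HDD X(1) X(2) X(3) by blast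
qed

end

lemma det_0x0: "A \<in> carrier_mat 0 0 \<Longrightarrow> det A = 1"
proof -
  assume A: "A \<in> carrier_mat 0 0"
  have "A = 1\<^sub>m 0" by (rule eq_matI, insert A, auto)
  thus ?thesis by simp
qed

lemma cpm_index: "i < d \<Longrightarrow> j < d \<Longrightarrow> char_poly_matrix (comp m d) $$ (i,j) =
  (if i = j then [:0,1:] else 0) + [:- (comp m d $$ (i,j)):]"
  unfolding char_poly_matrix_def comp_def by simp

lemma cpm_carrier: "char_poly_matrix (comp m d) \<in> carrier_mat d d"
  unfolding char_poly_matrix_def comp_def by simp

lemma comp_char_poly: fixes m :: "'a :: field poly"
  shows "monic m \<Longrightarrow> degree m = d \<Longrightarrow> d \<ge> 1 \<Longrightarrow> char_poly (comp m d) = m"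
proof (induct d arbitrary: m)
  case 0
  then show ?case by simp
next
  case (Suc d' m)
  let ?CP = "char_poly_matrix (comp m (Suc d'))"
  have CP: "?CP \<in> carrier_mat (Suc d') (Suc d')" by (rule cpm_carrier)
  have det: "char_poly (comp m (Suc d')) = (\<Sum>j<Suc d'. ?CP $$ (0,j) * cofactor ?CP 0 j)"
    unfolding char_poly_def by (rule laplace_expansion_row[OF CP], simp)
  show ?case
  proof (cases "d' = 0")
    case True
    have m: "m = [:coeff m 0, 1:]"
    proof (rule poly_eqI)
      fix k
      show "coeff m k = coeff [:coeff m 0, 1:] k"
      proof (cases k)
        case (Suc k')
        show ?thesis
        proof (cases k')
          case 0
          thus ?thesis using Suc Suc.prems True by simp
        next
          case (Suc k'')
          hence "coeff m k = 0" using \<open>k = Suc k'\<close> Suc.prems True by (intro coeff_eq_0, simp)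
          thus ?thesis using Suc \<open>k = Suc k'\<close> by simp
        qed
      qed simp
    qed
    have "char_poly (comp m (Suc d')) = ?CP $$ (0,0) * cofactor ?CP 0 0" using det True by simp
    also have "cofactor ?CP 0 0 = 1" unfolding cofactor_def
      by (simp, rule det_0x0, insert mat_delete_carrier[OF CP, of 0 0] True, simp)
    also have "?CP $$ (0,0) = [:0,1:] + [:- (comp m (Suc d') $$ (0, 0)):]"
      by (subst cpm_index, auto)
    also have "\<dots> = [:0,1:] + [:coeff m 0:]" using True by (simp add: comp_def)
    also have "\<dots> = m" by (subst (2) m, simp)
    finally show ?thesis by simp
  next
    case False
    obtain c q where mq: "m = pCons c q" by (cases m)
    have q0: "q \<noteq> 0" using Suc.prems False mq by auto
    have dq: "degree q = d'" using Suc.prems mq q0 by simp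
    have mon: "monic q" using Suc.prems mq q0 by simp
    have IH: "char_poly (comp q d') = q" using Suc.hyps[OF mon dq] False by simp
    have d1: "d' \<ge> 1" using False by simp
    have del00: "mat_delete ?CP 0 0 = char_poly_matrix (comp q d')"
    proof (rule eq_matI)
      fix i j assume "i < dim_row (char_poly_matrix (comp q d'))" "j < dim_col (char_poly_matrix (comp q d'))"
      hence i: "i < d'" and j: "j < d'" using cpm_carrier[of q d'] by auto
      have "mat_delete ?CP 0 0 $$ (i,j) = ?CP $$ (Suc i, Suc j)" unfolding mat_delete_def using i j CP by simp
      also have "\<dots> = (if Suc i = Suc j then [:0,1:] else 0) + [:- (comp m (Suc d') $$ (Suc i, Suc j)):]"
        using i j by (intro cpm_index, auto)
      also have "\<dots> = (if i = j then [:0,1:] else 0) + [:- (comp q d' $$ (i,j)):]"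
        using i j by (simp add: comp_def mq)
      also have "\<dots> = char_poly_matrix (comp q d') $$ (i,j)"
        using i j by (intro cpm_index[symmetric], auto)
      finally show "mat_delete ?CP 0 0 $$ (i,j) = char_poly_matrix (comp q d') $$ (i,j)" .
    qed (insert cpm_carrier[of q d'] CP, auto)
    define U where "U = mat_delete ?CP 0 d'"
    have U: "U \<in> carrier_mat d' d'" unfolding U_def using mat_delete_carrier[OF CP, of 0 d'] by simp
    have Uij: "U $$ (i,j) = (if j = Suc i then [:0,1:] else 0) + (if i = j then [:-1:] else 0)"
      if i: "i < d'" and j: "j < d'" for i j
    proof -
      have "U $$ (i,j) = ?CP $$ (Suc i, j)" unfolding U_def mat_delete_def using i j CP by simp
      also have "\<dots> = (if Suc i = j then [:0,1:] else 0) + [:- (comp m (Suc d') $$ (Suc i, j)):]"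
        using i j by (intro cpm_index, auto)
      also have "\<dots> = (if j = Suc i then [:0,1:] else 0) + (if i = j then [:-1:] else 0)"
        using i j by (auto simp: comp_def)
      finally show ?thesis .
    qed
    have ut: "upper_triangular U" unfolding upper_triangular_def using U Uij by auto
    have "det U = prod_list (diag_mat U)" by (rule det_upper_triangular[OF ut U])
    also have "diag_mat U = map (\<lambda>i. [:-1:]) [0..<d']" unfolding diag_mat_def using U Uij by simp
    also have "prod_list \<dots> = [:-1:] ^ d'" by (simp add: map_replicate_const prod_list_replicate)
    finally have detU: "det U = [:-1:] ^ d'" .
    have cof: "cofactor ?CP 0 d' = 1"
    proof -
      have "cofactor ?CP 0 d' = (-1) ^ d' * [:-1:] ^ d'" unfolding cofactor_def U_def[symmetric] detU by simp
      also have "\<dots> = ((-1) * [:-1:]) ^ d'" by (rule power_mult_distrib[symmetric])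
      also have "(-1) * [:-1:] = (1 :: 'a poly)" by (simp add: one_pCons)
      finally show ?thesis by simp
    qed
    have cof0: "cofactor ?CP 0 0 = q" unfolding cofactor_def del00 using IH by (simp add: char_poly_def)
    have terms: "?CP $$ (0,j) * cofactor ?CP 0 j = (if j = 0 then [:0,1:] * q else 0) + (if j = d' then [:c:] else 0)"
      if j: "j < Suc d'" for j
    proof -
      have "?CP $$ (0,j) = (if 0 = j then [:0,1:] else 0) + [:- (comp m (Suc d') $$ (0, j)):]"
        using j by (intro cpm_index, auto)
      also have "\<dots> = (if j = 0 then [:0,1:] else 0) + (if j = d' then [:c:] else 0)"
        using j d1 by (auto simp: comp_def mq)
      finally have "?CP $$ (0,j) = (if j = 0 then [:0,1:] else 0) + (if j = d' then [:c:] else 0)" .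
      thus ?thesis using cof cof0 d1 by auto
    qed
    have "char_poly (comp m (Suc d')) = (\<Sum>j<Suc d'. (if j = 0 then [:0,1:] * q else 0) + (if j = d' then [:c:] else 0))"
      unfolding det by (rule sum.cong[OF refl], rule terms, simp)
    also have "\<dots> = [:0,1:] * q + [:c:]" by (simp add: sum.distrib)
    also have "\<dots> = m" unfolding mq by (simp add: pCons_0_as_mult[symmetric] add.commute)
    finally show ?thesis .
  qed
qed

lemma det_ne_GL: fixes g :: "'a :: field mat"
  assumes g: "g \<in> carrier_mat n n"
  shows "invertible_mat g \<longleftrightarrow> det g \<noteq> 0"
proof
  assume "invertible_mat g"
  then obtain B where gB: "g * B = 1\<^sub>m (dim_row g)" and Bg: "B * g = 1\<^sub>m (dim_row B)"
    unfolding invertible_mat_def inverts_mat_def by blast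
  have "dim_col B = n" using arg_cong[OF gB, of dim_col] g by simp
  moreover have "dim_row B = n" using arg_cong[OF Bg, of dim_col] g by simp
  ultimately have B: "B \<in> carrier_mat n n" by auto
  have "det g * det B = 1" using det_mult[OF g B] gB g by simp
  thus "det g \<noteq> 0" by auto
next
  assume "det g \<noteq> 0"
  from det_non_zero_imp_unit[OF g this, of "()"] obtain B where B: "B \<in> carrier_mat n n"
    "g * B = 1\<^sub>m n" "B * g = 1\<^sub>m n" unfolding Units_def ring_mat_def by auto
  thus "invertible_mat g" unfolding invertible_mat_def inverts_mat_def using g by auto
qed

lemma inv_mat_props: fixes g :: "'a :: field mat"
  assumes g: "g \<in> carrier_mat n n" and d: "det g \<noteq> 0"
  shows "inv_mat g \<in> carrier_mat n n" "g * inv_mat g = 1\<^sub>m n" "inv_mat g * g = 1\<^sub>m n"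
proof -
  have U: "g \<in> Units (ring_mat TYPE('a) n ())" by (rule det_non_zero_imp_unit[OF g d])
  obtain B where B: "mat_inverse g = Some B"
    using mat_inverse(1)[OF g, of "()"] U by (cases "mat_inverse g", auto)
  from mat_inverse(2)[OF g B] B show "inv_mat g \<in> carrier_mat n n" "g * inv_mat g = 1\<^sub>m n" "inv_mat g * g = 1\<^sub>m n"
    unfolding inv_mat_def by auto
qed

lemma conj_iff: fixes g :: "'a :: field mat"
  assumes g: "g \<in> carrier_mat n n" and d: "det g \<noteq> 0" and a: "a \<in> carrier_mat n n"
  shows "g * a * inv_mat g = transpose_mat a \<longleftrightarrow> g * a = transpose_mat a * g"
proof -
  note I = inv_mat_props[OF g d]
  have aT: "transpose_mat a \<in> carrier_mat n n" using a by simp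
  show ?thesis
  proof
    assume h: "g * a * inv_mat g = transpose_mat a"
    have "g * a = g * a * (inv_mat g * g)" using g a by (simp add: I(3))
    also have "\<dots> = (g * a * inv_mat g) * g" by (rule assoc_mult_mat[symmetric, OF mult_carrier_mat[OF g a] I(1) g])
    finally show "g * a = transpose_mat a * g" unfolding h .
  next
    assume h: "g * a = transpose_mat a * g"
    have "g * a * inv_mat g = transpose_mat a * g * inv_mat g" unfolding h ..
    also have "\<dots> = transpose_mat a * (g * inv_mat g)" by (rule assoc_mult_mat[OF aT g I(1)])
    finally show "g * a * inv_mat g = transpose_mat a" using I(2) aT by simp
  qed
qed

lemma a3: "X \<in> carrier_mat n n \<Longrightarrow> Y \<in> carrier_mat n n \<Longrightarrow> Z \<in> carrier_mat n n \<Longrightarrow> X * Y * Z = X * (Y * Z)"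
  by (rule assoc_mult_mat)

lemma transfer: fixes A :: "'a :: field mat"
  assumes A: "A \<in> carrier_mat n n" and P: "P \<in> carrier_mat n n" and Q: "Q \<in> carrier_mat n n"
  and PQ: "P * Q = 1\<^sub>m n" and QP: "Q * P = 1\<^sub>m n"
  and Gb: "Gb \<in> carrier_mat n n" and GB: "Gb * (Q * A * P) = transpose_mat (Q * A * P) * Gb"
  shows "transpose_mat Q * Gb * Q * A = transpose_mat A * (transpose_mat Q * Gb * Q)"
    "transpose_mat Q * Gb * Q \<in> carrier_mat n n"
    "det Gb \<noteq> 0 \<Longrightarrow> det (transpose_mat Q * Gb * Q) \<noteq> 0"
    "transpose_mat Gb = Gb \<Longrightarrow> transpose_mat (transpose_mat Q * Gb * Q) = transpose_mat Q * Gb * Q"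
    "transpose_mat (transpose_mat Q * Gb * Q) = transpose_mat Q * Gb * Q \<Longrightarrow> transpose_mat Gb = Gb"
proof -
  define B where "B = Q * A * P"
  have B: "B \<in> carrier_mat n n" unfolding B_def using Q A P by simp
  have QT: "transpose_mat Q \<in> carrier_mat n n" using Q by simp
  have AT: "transpose_mat A \<in> carrier_mat n n" using A by simp
  have BT: "transpose_mat B \<in> carrier_mat n n" using B by simp
  have QA: "Q * A = B * Q"
  proof -
    have "B * Q = Q * A * (P * Q)" unfolding B_def by (rule a3[OF mult_carrier_mat[OF Q A] P Q])
    thus ?thesis unfolding PQ using Q A by simp
  qed
  have GB': "Gb * B = transpose_mat B * Gb" using GB unfolding B_def .
  have QG: "transpose_mat Q * Gb \<in> carrier_mat n n" using QT Gb by simp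
  have "transpose_mat Q * Gb * Q * A = (transpose_mat Q * Gb) * (Q * A)" by (rule a3[OF QG Q A])
  also have "\<dots> = (transpose_mat Q * Gb) * (B * Q)" unfolding QA ..
  also have "\<dots> = transpose_mat Q * (Gb * (B * Q))" by (rule a3[OF QT Gb mult_carrier_mat[OF B Q]])
  also have "Gb * (B * Q) = (Gb * B) * Q" by (rule a3[OF Gb B Q, symmetric])
  also have "\<dots> = (transpose_mat B * Gb) * Q" unfolding GB' ..
  also have "\<dots> = transpose_mat B * (Gb * Q)" by (rule a3[OF BT Gb Q])
  also have "transpose_mat Q * (transpose_mat B * (Gb * Q)) = (transpose_mat Q * transpose_mat B) * (Gb * Q)"
    by (rule a3[OF QT BT mult_carrier_mat[OF Gb Q], symmetric])
  also have "transpose_mat Q * transpose_mat B = transpose_mat (B * Q)" using B Q by (simp add: transpose_mult)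
  also have "\<dots> = transpose_mat A * transpose_mat Q" unfolding QA[symmetric] using Q A by (simp add: transpose_mult)
  also have "\<dots> * (Gb * Q) = transpose_mat A * (transpose_mat Q * (Gb * Q))" by (rule a3[OF AT QT mult_carrier_mat[OF Gb Q]])
  also have "transpose_mat Q * (Gb * Q) = transpose_mat Q * Gb * Q" by (rule a3[OF QT Gb Q, symmetric])
  finally show "transpose_mat Q * Gb * Q * A = transpose_mat A * (transpose_mat Q * Gb * Q)" .
  show G: "transpose_mat Q * Gb * Q \<in> carrier_mat n n" using QT Gb Q by simp
  have dQ: "det Q \<noteq> 0"
  proof
    assume "det Q = 0"
    hence "det (Q * P) = 0" using det_mult[OF Q P] by simp
    thus False unfolding QP by simp
  qed
  show "det Gb \<noteq> 0 \<Longrightarrow> det (transpose_mat Q * Gb * Q) \<noteq> 0"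
    using dQ by (simp add: det_mult[OF mult_carrier_mat[OF QT Gb] Q] det_mult[OF QT Gb] det_transpose[OF Q])
  have tr: "transpose_mat (transpose_mat Q * Gb * Q) = transpose_mat Q * transpose_mat Gb * Q"
    using QT Gb Q by (simp add: transpose_mult[of _ n n _ n])
  show "transpose_mat Gb = Gb \<Longrightarrow> transpose_mat (transpose_mat Q * Gb * Q) = transpose_mat Q * Gb * Q"
    unfolding tr by simp
  assume h: "transpose_mat (transpose_mat Q * Gb * Q) = transpose_mat Q * Gb * Q"
  have PT: "transpose_mat P \<in> carrier_mat n n" using P by simp
  have PQT: "transpose_mat P * transpose_mat Q = 1\<^sub>m n"
    using arg_cong[OF QP, of transpose_mat] Q P by (simp add: transpose_mult)
  have GbT: "transpose_mat Gb \<in> carrier_mat n n" using Gb by simp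
  have e: "transpose_mat Q * transpose_mat Gb * Q = transpose_mat Q * Gb * Q" using h unfolding tr .
  have sw: "transpose_mat P * (transpose_mat Q * X * Q) * P = X" if X: "X \<in> carrier_mat n n" for X
  proof -
    have "transpose_mat P * (transpose_mat Q * X * Q) = transpose_mat P * (transpose_mat Q * (X * Q))"
      using a3[OF QT X Q] by simp
    also have "\<dots> = (transpose_mat P * transpose_mat Q) * (X * Q)"
      by (rule a3[OF PT QT mult_carrier_mat[OF X Q], symmetric])
    also have "\<dots> = X * Q" unfolding PQT using X Q by simp
    finally have "transpose_mat P * (transpose_mat Q * X * Q) * P = X * Q * P" by simp
    also have "\<dots> = X * (Q * P)" by (rule a3[OF X Q P])
    finally show ?thesis unfolding QP using X by simp
  qed
  have "transpose_mat Gb = transpose_mat P * (transpose_mat Q * transpose_mat Gb * Q) * P" using sw[OF GbT] by simp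
  also have "\<dots> = transpose_mat P * (transpose_mat Q * Gb * Q) * P" unfolding e ..
  also have "\<dots> = Gb" by (rule sw[OF Gb])
  finally show "transpose_mat Gb = Gb" .
qed

lemma inj_det: fixes G :: "'a :: field mat" assumes G: "G \<in> carrier_mat n n" and inj: "inj_mat G"
  shows "det G \<noteq> 0"
  using inj G unfolding det_0_iff_vec_prod_zero[OF G] inj_mat_def by auto

lemma block_GB: fixes G :: "'a :: field mat"
  assumes G: "G \<in> carrier_mat d d" and X: "X \<in> carrier_mat d k" and GY: "GY \<in> carrier_mat k k"
  and D: "D \<in> carrier_mat d d" and Y: "Y \<in> carrier_mat k k"
  and GD: "G * D = transpose_mat D * G" and XY: "X * Y = transpose_mat D * X" and GYY: "GY * Y = transpose_mat Y * GY"
  shows "four_block_mat G X (0\<^sub>m k d) GY * four_block_mat D (0\<^sub>m d k) (0\<^sub>m k d) Y =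
    transpose_mat (four_block_mat D (0\<^sub>m d k) (0\<^sub>m k d) Y) * four_block_mat G X (0\<^sub>m k d) GY"
proof -
  have DT: "transpose_mat D \<in> carrier_mat d d" and YT: "transpose_mat Y \<in> carrier_mat k k" using D Y by auto
  have tr: "transpose_mat (four_block_mat D (0\<^sub>m d k) (0\<^sub>m k d) Y) = four_block_mat (transpose_mat D) (0\<^sub>m d k) (0\<^sub>m k d) (transpose_mat Y)"
    by (subst transpose_four_block_mat[OF D zero_carrier_mat zero_carrier_mat Y], simp)
  have l: "four_block_mat G X (0\<^sub>m k d) GY * four_block_mat D (0\<^sub>m d k) (0\<^sub>m k d) Y =
    four_block_mat (G * D + X * 0\<^sub>m k d) (G * 0\<^sub>m d k + X * Y) (0\<^sub>m k d * D + GY * 0\<^sub>m k d) (0\<^sub>m k d * 0\<^sub>m d k + GY * Y)"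
    by (rule mult_four_block_mat[OF G X zero_carrier_mat GY D zero_carrier_mat zero_carrier_mat Y])
  have r: "four_block_mat (transpose_mat D) (0\<^sub>m d k) (0\<^sub>m k d) (transpose_mat Y) * four_block_mat G X (0\<^sub>m k d) GY =
    four_block_mat (transpose_mat D * G + 0\<^sub>m d k * 0\<^sub>m k d) (transpose_mat D * X + 0\<^sub>m d k * GY)
      (0\<^sub>m k d * G + transpose_mat Y * 0\<^sub>m k d) (0\<^sub>m k d * X + transpose_mat Y * GY)"
    by (rule mult_four_block_mat[OF DT zero_carrier_mat zero_carrier_mat YT G X zero_carrier_mat GY])
  show ?thesis unfolding tr l r
    by (rule cong_four_block_mat, insert G X GY D Y DT YT GD XY GYY, auto)
qed

lemma block_det: fixes G :: "'a :: field mat"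
  assumes G: "G \<in> carrier_mat d d" and X: "X \<in> carrier_mat d k" and GY: "GY \<in> carrier_mat k k"
  and dG: "det G \<noteq> 0" and dGY: "det GY \<noteq> 0"
  shows "det (four_block_mat G X (0\<^sub>m k d) GY) \<noteq> 0"
  unfolding det_four_block_mat_lower_left_zero[OF G X refl GY] using dG dGY by simp

lemma part_i: fixes a :: "'a :: field mat"
  shows "a \<in> carrier_mat n n \<Longrightarrow> \<exists>g \<in> carrier_mat n n. det g \<noteq> 0 \<and> transpose_mat g = g \<and> g * a = transpose_mat a * g"
proof (induct n arbitrary: a rule: less_induct)
  case (less n a)
  note a = less(2)
  show ?case
  proof (cases "n = 0")
    case True
    show ?thesis
      by (rule bexI[of _ "1\<^sub>m 0"], insert a True, auto intro!: eq_matI)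
  next
    case False
    hence n1: "n \<ge> 1" by simp
    from max_ann[OF a] obtain v where v: "v \<in> carrier_vec n" and max: "\<And>w. w \<in> carrier_vec n \<Longrightarrow> ann a w dvd ann a v" by blast
    define m where "m = ann a v"
    have m0: "poly_mat m a = 0\<^sub>m n n" unfolding m_def by (rule minpoly_props(1)[OF a v max])
    have dpos: "degree m \<ge> 1" unfolding m_def by (rule ann_deg_pos[OF a v n1 max])
    interpret cycdata a n v m by (unfold_locales, insert a v m0 dpos, auto simp: m_def)
    from decomp obtain P Q Y G X where P: "P \<in> carrier_mat n n" and Q: "Q \<in> carrier_mat n n"
      and PQ: "P * Q = 1\<^sub>m n" and QP: "Q * P = 1\<^sub>m n" and Y: "Y \<in> carrier_mat (n - d) (n - d)"
      and QAP: "Q * a * P = four_block_mat D (0\<^sub>m d (n - d)) (0\<^sub>m (n - d) d) Y"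
      and G: "G \<in> carrier_mat d d" and GT: "transpose_mat G = G" and injG: "inj_mat G"
      and GD: "G * D = transpose_mat D * G" by blast
    have lt: "n - d < n" using dpos n1 by simp
    from less(1)[OF lt Y] obtain GY where GY: "GY \<in> carrier_mat (n - d) (n - d)" and dGY: "det GY \<noteq> 0"
      and GYT: "transpose_mat GY = GY" and GYY: "GY * Y = transpose_mat Y * GY" by blast
    define Gb where "Gb = four_block_mat G (0\<^sub>m d (n - d)) (0\<^sub>m (n - d) d) GY"
    have dn: "d + (n - d) = n" using d_le by simp
    have Gb: "Gb \<in> carrier_mat n n" unfolding Gb_def using four_block_carrier_mat[OF G GY] dn by simp
    have GB: "Gb * (Q * a * P) = transpose_mat (Q * a * P) * Gb" unfolding QAP Gb_def
      by (rule block_GB[OF G zero_carrier_mat GY D Y GD _ GYY], insert D Y, simp)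
    have dGb: "det Gb \<noteq> 0" unfolding Gb_def by (rule block_det[OF G zero_carrier_mat GY inj_det[OF G injG] dGY])
    have GbT: "transpose_mat Gb = Gb" unfolding Gb_def
      by (subst transpose_four_block_mat[OF G zero_carrier_mat zero_carrier_mat GY], simp add: GT GYT)
    note T = transfer[OF a P Q PQ QP Gb GB]
    show ?thesis using T(1,2) T(3)[OF dGb] T(4)[OF GbT] by blast
  qed
qed

lemma adj_scalar: fixes a :: "'a :: field mat"
  assumes a: "a \<in> carrier_mat n n" and x: "x \<in> carrier_vec n" and z: "z \<in> carrier_vec n"
  shows "(a *\<^sub>v x) \<bullet> z = x \<bullet> (transpose_mat a *\<^sub>v z)"
  using transpose_vec_mult_scalar[of "transpose_mat a" n n z x] a x z by simp

lemma part_ii: fixes a :: "'a :: field mat"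
  assumes a: "a \<in> carrier_mat n n" and n1: "n \<ge> 1" and mc: "min_poly a = char_poly a"
  and g: "g \<in> carrier_mat n n" and ga: "g * a = transpose_mat a * g"
  shows "transpose_mat g = g"
proof -
  from max_ann[OF a] obtain v where v: "v \<in> carrier_vec n" and max: "\<And>w. w \<in> carrier_vec n \<Longrightarrow> ann a w dvd ann a v" by blast
  define m where "m = ann a v"
  have m0: "poly_mat m a = 0\<^sub>m n n" unfolding m_def by (rule minpoly_props(1)[OF a v max])
  have dpos: "degree m \<ge> 1" unfolding m_def by (rule ann_deg_pos[OF a v n1 max])
  interpret cycdata a n v m by (unfold_locales, insert a v m0 dpos, auto simp: m_def)
  have "min_poly a = m" unfolding m_def by (rule minpoly_props(3)[OF a v max])
  hence dn: "d = n" using mc degree_monic_char_poly[OF a] by simp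
  have Kc: "K \<in> carrier_mat n n" using K unfolding dn .
  from inj_mat_inverse[OF Kc K_inj] obtain Ki where Ki: "Ki \<in> carrier_mat n n"
    "K * Ki = 1\<^sub>m n" "Ki * K = 1\<^sub>m n" by blast
  have step: "(a *\<^sub>v x) \<bullet> (g *\<^sub>v y) = x \<bullet> (g *\<^sub>v (a *\<^sub>v y))" if x: "x \<in> carrier_vec n" and y: "y \<in> carrier_vec n" for x y
  proof -
    have gy: "g *\<^sub>v y \<in> carrier_vec n" using g y by simp
    have "(a *\<^sub>v x) \<bullet> (g *\<^sub>v y) = x \<bullet> (transpose_mat a *\<^sub>v (g *\<^sub>v y))" by (rule adj_scalar[OF a x gy])
    also have "transpose_mat a *\<^sub>v (g *\<^sub>v y) = (transpose_mat a * g) *\<^sub>v y"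
      by (rule assoc_mult_mat_vec[symmetric, OF _ g y], insert a, simp)
    also have "\<dots> = g *\<^sub>v (a *\<^sub>v y)" unfolding ga[symmetric] by (rule assoc_mult_mat_vec[OF g a y])
    finally show ?thesis .
  qed
  have pw: "(a ^\<^sub>m i *\<^sub>v x) \<bullet> (g *\<^sub>v y) = x \<bullet> (g *\<^sub>v (a ^\<^sub>m i *\<^sub>v y))" if x: "x \<in> carrier_vec n" and y: "y \<in> carrier_vec n" for i x y
    using y
  proof (induct i arbitrary: y)
    case 0
    then show ?case using x a by simp
  next
    case (Suc i y)
    have ay: "a *\<^sub>v y \<in> carrier_vec n" using a Suc(2) by simp
    have "(a ^\<^sub>m Suc i *\<^sub>v x) \<bullet> (g *\<^sub>v y) = (a *\<^sub>v (a ^\<^sub>m i *\<^sub>v x)) \<bullet> (g *\<^sub>v y)"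
      by (subst pow_mat_Suc_vec[OF a x], rule refl)
    also have "\<dots> = (a ^\<^sub>m i *\<^sub>v x) \<bullet> (g *\<^sub>v (a *\<^sub>v y))" by (rule step[OF _ Suc(2)], insert a x, simp)
    also have "\<dots> = x \<bullet> (g *\<^sub>v (a ^\<^sub>m i *\<^sub>v (a *\<^sub>v y)))" by (rule Suc(1)[OF ay])
    also have "a ^\<^sub>m i *\<^sub>v (a *\<^sub>v y) = a ^\<^sub>m Suc i *\<^sub>v y"
      using pow_add_vec[OF a Suc(2), of i 1] a by simp
    finally show ?case .
  qed
  define S where "S = transpose_mat K * (g * K)"
  have S: "S \<in> carrier_mat n n" unfolding S_def using Kc g by simp
  have Sij: "S $$ (i,j) = v \<bullet> (g *\<^sub>v (a ^\<^sub>m (i + j) *\<^sub>v v))" if i: "i < n" and j: "j < n" for i j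
  proof -
    have "S $$ (i,j) = row (transpose_mat K) i \<bullet> col (g * K) j" unfolding S_def using Kc g i j dn
      by (simp del: col_mult2)
    also have "row (transpose_mat K) i = col K i" using Kc i dn by simp
    also have "col (g * K) j = g *\<^sub>v col K j" by (rule col_mult2[OF g Kc j])
    also have "col K i = a ^\<^sub>m i *\<^sub>v v" using K_col[of i] i dn by simp
    also have "col K j = a ^\<^sub>m j *\<^sub>v v" using K_col[of j] j dn by simp
    also have "(a ^\<^sub>m i *\<^sub>v v) \<bullet> (g *\<^sub>v (a ^\<^sub>m j *\<^sub>v v)) = v \<bullet> (g *\<^sub>v (a ^\<^sub>m i *\<^sub>v (a ^\<^sub>m j *\<^sub>v v)))"
      by (rule pw[OF v], insert a v, simp)
    also have "a ^\<^sub>m i *\<^sub>v (a ^\<^sub>m j *\<^sub>v v) = a ^\<^sub>m (i + j) *\<^sub>v v" by (rule pow_add_vec[OF a v])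
    finally show ?thesis .
  qed
  have ST: "transpose_mat S = S"
  proof -
    have e: "\<And>i j. i < n \<Longrightarrow> j < n \<Longrightarrow> S $$ (j,i) = S $$ (i,j)"
      by (simp only: Sij add.commute)
    show ?thesis by (rule eq_matI, insert S e, auto)
  qed
  have KT: "transpose_mat K \<in> carrier_mat n n" using Kc by simp
  have KiT: "transpose_mat Ki \<in> carrier_mat n n" using Ki by simp
  have gT: "transpose_mat g \<in> carrier_mat n n" using g by simp
  have STe: "transpose_mat S = transpose_mat K * (transpose_mat g * K)" unfolding S_def
    using Kc g by (simp add: transpose_mult[of _ n n _ n])
  have KKT: "transpose_mat Ki * transpose_mat K = 1\<^sub>m n"
    using transpose_mult[OF Kc Ki(1)] Ki(2) by simp
  have sw: "transpose_mat Ki * (transpose_mat K * (X * K)) * Ki = X" if X: "X \<in> carrier_mat n n" for X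
  proof -
    have "transpose_mat Ki * (transpose_mat K * (X * K)) = (transpose_mat Ki * transpose_mat K) * (X * K)"
      by (rule a3[OF KiT KT mult_carrier_mat[OF X Kc], symmetric])
    also have "\<dots> = X * K" unfolding KKT using X Kc by simp
    finally have "transpose_mat Ki * (transpose_mat K * (X * K)) * Ki = X * K * Ki" by simp
    also have "\<dots> = X * (K * Ki)" by (rule a3[OF X Kc Ki(1)])
    finally show ?thesis unfolding Ki(2) using X by simp
  qed
  have "transpose_mat g = transpose_mat Ki * transpose_mat S * Ki" unfolding STe sw[OF gT] ..
  also have "\<dots> = transpose_mat Ki * S * Ki" unfolding ST ..
  also have "\<dots> = g" unfolding S_def by (rule sw[OF g])
  finally show ?thesis .
qed

lemma part_iii: fixes a :: "'a :: field mat"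
  assumes a: "a \<in> carrier_mat n n" and n1: "n \<ge> 1" and mc: "min_poly a \<noteq> char_poly a"
  shows "\<exists>g \<in> carrier_mat n n. det g \<noteq> 0 \<and> g * a = transpose_mat a * g \<and> transpose_mat g \<noteq> g"
proof -
  from max_ann[OF a] obtain v where v: "v \<in> carrier_vec n" and max: "\<And>w. w \<in> carrier_vec n \<Longrightarrow> ann a w dvd ann a v" by blast
  define m where "m = ann a v"
  have m0: "poly_mat m a = 0\<^sub>m n n" unfolding m_def by (rule minpoly_props(1)[OF a v max])
  have dpos: "degree m \<ge> 1" unfolding m_def by (rule ann_deg_pos[OF a v n1 max])
  interpret cycdata a n v m by (unfold_locales, insert a v m0 dpos, auto simp: m_def)
  have mp: "min_poly a = m" unfolding m_def by (rule minpoly_props(3)[OF a v max])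
  have dn: "d < n"
  proof (rule ccontr)
    assume "\<not> d < n"
    hence dn: "d = n" using d_le by simp
    have Kc: "K \<in> carrier_mat n n" using K unfolding dn .
    have Dc: "D \<in> carrier_mat n n" using D unfolding dn .
    from inj_mat_inverse[OF Kc K_inj] obtain Ki where Ki: "Ki \<in> carrier_mat n n"
      "K * Ki = 1\<^sub>m n" "Ki * K = 1\<^sub>m n" by blast
    have "a = a * (K * Ki)" unfolding Ki(2) using a by simp
    also have "\<dots> = (a * K) * Ki" by (rule a3[OF a Kc Ki(1), symmetric])
    also have "\<dots> = K * D * Ki" unfolding AK ..
    finally have aeq: "a = K * D * Ki" .
    have "similar_mat a D" unfolding similar_mat_def similar_mat_wit_def Let_def
      by (rule exI[of _ K], rule exI[of _ Ki], insert a Kc Dc Ki aeq, auto)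
    hence "char_poly a = char_poly D" by (rule char_poly_similar)
    also have "\<dots> = m" by (rule comp_char_poly[OF monic_m refl dpos])
    finally show False using mc mp by simp
  qed
  from decomp obtain P Q Y G X where P: "P \<in> carrier_mat n n" and Q: "Q \<in> carrier_mat n n"
    and PQ: "P * Q = 1\<^sub>m n" and QP: "Q * P = 1\<^sub>m n" and Y: "Y \<in> carrier_mat (n - d) (n - d)"
    and QAP: "Q * a * P = four_block_mat D (0\<^sub>m d (n - d)) (0\<^sub>m (n - d) d) Y"
    and G: "G \<in> carrier_mat d d" and GT: "transpose_mat G = G" and injG: "inj_mat G"
    and GD: "G * D = transpose_mat D * G" and X: "X \<in> carrier_mat d (n - d)"
    and XY: "X * Y = transpose_mat D * X" and X0: "n - d \<ge> 1 \<longrightarrow> X \<noteq> 0\<^sub>m d (n - d)" by blast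
  have X0': "X \<noteq> 0\<^sub>m d (n - d)" using X0 dn by simp
  from part_i[OF Y] obtain GY where GY: "GY \<in> carrier_mat (n - d) (n - d)" and dGY: "det GY \<noteq> 0"
    and GYY: "GY * Y = transpose_mat Y * GY" by blast
  define Gb where "Gb = four_block_mat G X (0\<^sub>m (n - d) d) GY"
  have dnn: "d + (n - d) = n" using d_le by simp
  have Gb: "Gb \<in> carrier_mat n n" unfolding Gb_def using four_block_carrier_mat[OF G GY] dnn by simp
  have GB: "Gb * (Q * a * P) = transpose_mat (Q * a * P) * Gb" unfolding QAP Gb_def
    by (rule block_GB[OF G X GY D Y GD XY GYY])
  have dGb: "det Gb \<noteq> 0" unfolding Gb_def by (rule block_det[OF G X GY inj_det[OF G injG] dGY])
  have GbT: "transpose_mat Gb \<noteq> Gb"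
  proof
    assume h: "transpose_mat Gb = Gb"
    have "\<exists>i j. i < d \<and> j < n - d \<and> X $$ (i,j) \<noteq> 0"
    proof (rule ccontr)
      assume "\<not> ?thesis"
      hence "X = 0\<^sub>m d (n - d)" using X by (intro eq_matI, auto)
      with X0' show False by simp
    qed
    then obtain i j where ij: "i < d" "j < n - d" "X $$ (i,j) \<noteq> 0" by blast
    have "Gb $$ (i, d + j) = X $$ (i,j)" unfolding Gb_def using G X GY ij by simp
    moreover have "transpose_mat Gb $$ (i, d + j) = Gb $$ (d + j, i)" using Gb ij dnn by simp
    moreover have "Gb $$ (d + j, i) = 0" unfolding Gb_def using G X GY ij by simp
    ultimately show False using h ij by simp
  qed
  note T = transfer[OF a P Q PQ QP Gb GB]
  have "transpose_mat (transpose_mat Q * Gb * Q) \<noteq> transpose_mat Q * Gb * Q" using T(5) GbT by blast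
  thus ?thesis using T(1,2) T(3)[OF dGb] by blast
qed

theorem mainTheorem3:
  fixes a :: "'a :: field mat" and n :: nat
  assumes "n \<ge> 1" and "a \<in> carrier_mat n n"
  shows "(\<exists>g \<in> GL n. g * a * inv_mat g = transpose_mat a \<and> transpose_mat g = g)
       \<and> (min_poly a = char_poly a \<longrightarrow>
           (\<forall>g \<in> GL n. g * a * inv_mat g = transpose_mat a \<longrightarrow> transpose_mat g = g))
       \<and> (min_poly a \<noteq> char_poly a \<longrightarrow>
           (\<exists>g \<in> GL n. g * a * inv_mat g = transpose_mat a \<and> transpose_mat g \<noteq> g))"
proof (intro conjI impI ballI)
  note n1 = assms(1) and a = assms(2)
  have GLI: "g \<in> GL n" if "g \<in> carrier_mat n n" "det g \<noteq> 0" for g :: "'a mat"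
    unfolding GL_def using det_ne_GL[OF that(1)] that by auto
  have GLD: "g \<in> carrier_mat n n" "det g \<noteq> 0" if "g \<in> GL n" for g :: "'a mat"
    using that det_ne_GL[of g n] unfolding GL_def by auto
  from part_i[OF a] obtain g where g: "g \<in> carrier_mat n n" "det g \<noteq> 0" "transpose_mat g = g"
    "g * a = transpose_mat a * g" by blast
  show "\<exists>g \<in> GL n. g * a * inv_mat g = transpose_mat a \<and> transpose_mat g = g"
    using GLI[OF g(1,2)] conj_iff[OF g(1,2) a] g(3,4) by blast
next
  fix g assume mc: "min_poly a = char_poly a" and gG: "g \<in> GL n" and h: "g * a * inv_mat g = transpose_mat a"
  have gc: "g \<in> carrier_mat n n" and dg: "det g \<noteq> 0" using gG det_ne_GL[of g n] unfolding GL_def by auto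
  have "g * a = transpose_mat a * g" using conj_iff[OF gc dg assms(2)] h by simp
  thus "transpose_mat g = g" by (rule part_ii[OF assms(2) assms(1) mc gc])
next
  assume mc: "min_poly a \<noteq> char_poly a"
  from part_iii[OF assms(2) assms(1) mc] obtain g where g: "g \<in> carrier_mat n n" "det g \<noteq> 0"
    "g * a = transpose_mat a * g" "transpose_mat g \<noteq> g" by blast
  have "g \<in> GL n" unfolding GL_def using det_ne_GL[OF g(1)] g by auto
  thus "\<exists>g \<in> GL n. g * a * inv_mat g = transpose_mat a \<and> transpose_mat g \<noteq> g"
    using conj_iff[OF g(1,2) assms(2)] g(3,4) by blast
qed

end
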